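(* Let $L$ be a finite relational language and let $K$ be the class of finite $L$-structures (here the empty structure is allowed as a member of $K$). Let $\mathcal{A}\in K$. (1) If $\mathcal{A}$ is empty, then $I(\mathcal{A})$ is $m$-complete $\Pi^0_1$ within $K$. (2) If $\mathcal{A}$ has size $n\ge 1$, then $I(\mathcal{A})$ is $m$-complete $d$-c.e. within $K$.
   Context: Structures have universes contained in $\omega$ and are identified with their atomic diagrams $D(\mathcal{A})$; $\mathcal{A}$ is computable if $D(\mathcal{A})$ is computable. Let $(\varphi_a)_{a\in\omega}$ be a standard computable enumeration of the unary partial computable functions. An index for a computable structure $\mathcal{A}$ is a number $a$ with $\varphi_a=\chi_{D(\mathcal{A})}$. The index set $I(\mathcal{A})$ is the set of all indices of computable structures isomorphic to $\mathcal{A}$; for a class $K$ closed under isomorphism, $I(K)$ is the set of indices of computable members of $K$. For a complexity class $\Gamma$ (e.g. $\Pi^0_1$, or $d$-c.e. = the class of sets $S_1-S_2$ with $S_1,S_2$ c.e.), $I(\mathcal{A})$ is $\Gamma$ within $K$ if $I(\mathcal{A})=R\cap I(K)$ for some $R\in\Gamma$, and it is $m$-complete $\Gamma$ within $K$ if it is $\Gamma$ within $K$ and for every $S\in\Gamma$ there is a computable $f:\omega\to I(K)$ with $n\in S$ iff $f(n)\in I(\mathcal{A})$ (equivalently, a uniformly computable sequence $(\mathcal{C}_n)$ of members of $K$ with $n\in S$ iff $\mathcal{C}_n\cong\mathcal{A}$). *)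

theory Defs
  imports Main "HOL-Library.Nat_Bijection"
begin

text \<open>Unary partial recursive functions on nat, using the Cantor pairing
  prod_encode / prod_decode for tupling.\<close>

datatype rf = Zero | Succ | Left | Right | Comp rf rf | Pair rf rf | Rec rf rf | Mu rf

inductive ev :: "rf \<Rightarrow> nat \<Rightarrow> nat \<Rightarrow> bool" where
  ev_Zero: "ev Zero x 0"
| ev_Succ: "ev Succ x (Suc x)"
| ev_Left: "ev Left x (fst (prod_decode x))"
| ev_Right: "ev Right x (snd (prod_decode x))"
| ev_Comp: "ev g x y \<Longrightarrow> ev f y z \<Longrightarrow> ev (Comp f g) x z"
| ev_Pair: "ev f x y \<Longrightarrow> ev g x z \<Longrightarrow> ev (Pair f g) x (prod_encode (y, z))"
| ev_Rec0: "ev f x y \<Longrightarrow> ev (Rec f g) (prod_encode (0, x)) y"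
| ev_RecS: "ev (Rec f g) (prod_encode (n, x)) y \<Longrightarrow>
             ev g (prod_encode (n, prod_encode (y, x))) z \<Longrightarrow>
             ev (Rec f g) (prod_encode (Suc n, x)) z"
| ev_Mu: "ev f (prod_encode (y, x)) 0 \<Longrightarrow>
          (\<forall>z<y. \<exists>v. v \<noteq> 0 \<and> ev f (prod_encode (z, x)) v) \<Longrightarrow>
          ev (Mu f) x y"

lemma fst_prod_decode_le: "fst (prod_decode m) \<le> m"
  by (metis le_prod_encode_1 prod.collapse prod_decode_inverse)

lemma snd_prod_decode_le: "snd (prod_decode m) \<le> m"
  by (metis le_prod_encode_2 prod.collapse prod_decode_inverse)

function decode :: "nat \<Rightarrow> rf" where
  "decode n =
    (if n mod 8 = 0 then Zero
     else if n mod 8 = 1 then Succ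
     else if n mod 8 = 2 then Left
     else if n mod 8 = 3 then Right
     else if n mod 8 = 4 then Comp (decode (fst (prod_decode (n div 8)))) (decode (snd (prod_decode (n div 8))))
     else if n mod 8 = 5 then Pair (decode (fst (prod_decode (n div 8)))) (decode (snd (prod_decode (n div 8))))
     else if n mod 8 = 6 then Rec (decode (fst (prod_decode (n div 8)))) (decode (snd (prod_decode (n div 8))))
     else Mu (decode (n div 8)))"
  by auto
lemma div8_lt: "(n::nat) mod 8 \<noteq> 0 \<Longrightarrow> n div 8 < n"
  by (cases "n = 0") auto

lemma div8_fst: "(n::nat) mod 8 \<noteq> 0 \<Longrightarrow> fst (prod_decode (n div 8)) < n"
  using div8_lt fst_prod_decode_le le_less_trans by blast

lemma div8_snd: "(n::nat) mod 8 \<noteq> 0 \<Longrightarrow> snd (prod_decode (n div 8)) < n"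
  using div8_lt snd_prod_decode_le le_less_trans by blast

termination decode
  by (relation "measure id") (auto simp: div8_lt div8_fst div8_snd)

definition phi :: "nat \<Rightarrow> nat \<Rightarrow> nat option" where
  "phi a x = (if \<exists>y. ev (decode a) x y then Some (THE y. ev (decode a) x y) else None)"

definition total_computable :: "(nat \<Rightarrow> nat) \<Rightarrow> bool" where
  "total_computable f \<longleftrightarrow> (\<exists>e. \<forall>x. phi e x = Some (f x))"

definition ce :: "nat set \<Rightarrow> bool" where
  "ce S \<longleftrightarrow> (\<exists>e. S = {x. phi e x \<noteq> None})"

definition Pi01 :: "nat set set" where
  "Pi01 = {S. ce (- S)}"

definition dce :: "nat set set" where
  "dce = {S1 - S2 | S1 S2. ce S1 \<and> ce S2}"

text \<open>A finite relational language is a list of arities: symbol i has arity ar ! i.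
  An L-structure is a universe (a subset of nat) together with an interpretation
  of the relation symbols (only tuples from the universe matter).\<close>

type_synonym struc = "nat set \<times> (nat \<Rightarrow> nat list \<Rightarrow> bool)"

datatype atom = AEq nat nat | ARel nat "nat list"

fun atom_wf :: "nat list \<Rightarrow> nat set \<Rightarrow> atom \<Rightarrow> bool" where
  "atom_wf ar U (AEq a b) \<longleftrightarrow> a \<in> U \<and> b \<in> U"
| "atom_wf ar U (ARel i xs) \<longleftrightarrow> i < length ar \<and> length xs = ar ! i \<and> set xs \<subseteq> U"

fun holds :: "struc \<Rightarrow> atom \<Rightarrow> bool" where
  "holds A (AEq a b) \<longleftrightarrow> a = b"
| "holds A (ARel i xs) \<longleftrightarrow> snd A i xs"

fun atom_code :: "atom \<Rightarrow> nat" where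
  "atom_code (AEq a b) = prod_encode (0, prod_encode (a, b))"
| "atom_code (ARel i xs) = prod_encode (Suc i, list_encode xs)"

text \<open>Code of a literal: (True, at) codes the atomic sentence at, (False, at) its negation.\<close>
definition lit_code :: "bool \<Rightarrow> atom \<Rightarrow> nat" where
  "lit_code p at = prod_encode (if p then 1 else 0, atom_code at)"

text \<open>Atomic diagram: codes of atomic sentences and negated atomic sentences
  (with constants for the elements of the universe) true in A.\<close>
definition diagram :: "nat list \<Rightarrow> struc \<Rightarrow> nat set" where
  "diagram ar A = {lit_code p at | p at. atom_wf ar (fst A) at \<and> (holds A at \<longleftrightarrow> p)}"

definition iso :: "nat list \<Rightarrow> struc \<Rightarrow> struc \<Rightarrow> bool" where
  "iso ar A B \<longleftrightarrow> (\<exists>h. bij_betw h (fst A) (fst B) \<and>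
     (\<forall>i < length ar. \<forall>xs. length xs = ar ! i \<and> set xs \<subseteq> fst A \<longrightarrow>
        (snd A i xs \<longleftrightarrow> snd B i (map h xs))))"

definition is_index :: "nat list \<Rightarrow> nat \<Rightarrow> struc \<Rightarrow> bool" where
  "is_index ar a A \<longleftrightarrow> (\<forall>x. phi a x = Some (if x \<in> diagram ar A then 1 else 0))"

definition index_set :: "nat list \<Rightarrow> struc \<Rightarrow> nat set" where
  "index_set ar A = {a. \<exists>B. iso ar B A \<and> is_index ar a B}"

definition index_set_fin :: "nat list \<Rightarrow> nat set" where
  "index_set_fin ar = {a. \<exists>B. finite (fst B) \<and> is_index ar a B}"

definition within :: "nat set set \<Rightarrow> nat set \<Rightarrow> nat set \<Rightarrow> bool" where
  "within \<Gamma> IA IK \<longleftrightarrow> (\<exists>R \<in> \<Gamma>. IA = R \<inter> IK)"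

definition m_complete_within :: "nat set set \<Rightarrow> nat set \<Rightarrow> nat set \<Rightarrow> bool" where
  "m_complete_within \<Gamma> IA IK \<longleftrightarrow> within \<Gamma> IA IK \<and>
     (\<forall>S \<in> \<Gamma>. \<exists>f. total_computable f \<and> (\<forall>n. f n \<in> IK) \<and> (\<forall>n. n \<in> S \<longleftrightarrow> f n \<in> IA))"

end

theory Submission
  imports Defs
begin

lemma ev_det: "ev p x y \<Longrightarrow> ev p x y' \<Longrightarrow> y = y'"
proof (induction arbitrary: y' rule: ev.induct)
  case (ev_Comp g x y f z)
  from ev_Comp.prems show ?case by (cases rule: ev.cases) (use ev_Comp.IH in auto)
next
  case (ev_Pair f x y g z)
  from ev_Pair.prems show ?case by (cases rule: ev.cases) (use ev_Pair.IH in auto)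
next
  case (ev_Rec0 f x y g)
  from ev_Rec0.prems show ?case by (cases rule: ev.cases) (use ev_Rec0.IH in auto)
next
  case (ev_RecS f g n x y z)
  from ev_RecS.prems show ?case by (cases rule: ev.cases) (use ev_RecS.IH in auto)
next
  case (ev_Mu f y x)
  from ev_Mu.prems show ?case
  proof (cases rule: ev.cases)
    case ev_Mu
    show ?thesis
    proof (rule ccontr)
      assume ne: "y \<noteq> y'"
      show False
      proof (cases "y < y'")
        case True
        with ev_Mu obtain v where "v \<noteq> 0" "ev f (prod_encode (y, x)) v" by auto
        with ev_Mu.IH(1) show False by auto
      next
        case False
        with ne have "y' < y" by auto
        with ev_Mu.IH(2) obtain v where "v \<noteq> 0" "\<forall>u. ev f (prod_encode (y', x)) u \<longrightarrow> v = u" by auto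
        with ev_Mu show False by auto
      qed
    qed
  qed
next
  case ev_Zero then show ?case by (cases rule: ev.cases) simp_all
next
  case ev_Succ then show ?case by (cases rule: ev.cases) simp_all
next
  case ev_Left then show ?case by (cases rule: ev.cases) simp_all
next
  case ev_Right then show ?case by (cases rule: ev.cases) simp_all
qed

primrec enc :: "rf \<Rightarrow> nat" where
  "enc Zero = 0"
| "enc Succ = 1"
| "enc Left = 2"
| "enc Right = 3"
| "enc (Comp f g) = 4 + 8 * prod_encode (enc f, enc g)"
| "enc (Pair f g) = 5 + 8 * prod_encode (enc f, enc g)"
| "enc (Rec f g) = 6 + 8 * prod_encode (enc f, enc g)"
| "enc (Mu f) = 7 + 8 * enc f"

declare decode.simps[simp del]

lemma decode_0: "decode (8*k) = Zero" by (subst decode.simps) (simp add: mod_Suc)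
lemma decode_1: "decode (1 + 8*k) = Succ" by (subst decode.simps) (simp add: mod_Suc)
lemma decode_2: "decode (2 + 8*k) = Left" by (subst decode.simps) (simp add: mod_Suc)
lemma decode_3: "decode (3 + 8*k) = Right" by (subst decode.simps) (simp add: mod_Suc)
lemma decode_4: "decode (4 + 8*k) = Comp (decode (fst (prod_decode k))) (decode (snd (prod_decode k)))"
  by (subst decode.simps) (simp add: mod_Suc)
lemma decode_5: "decode (5 + 8*k) = Pair (decode (fst (prod_decode k))) (decode (snd (prod_decode k)))"
  by (subst decode.simps) (simp add: mod_Suc)
lemma decode_6: "decode (6 + 8*k) = Rec (decode (fst (prod_decode k))) (decode (snd (prod_decode k)))"
  by (subst decode.simps) (simp add: mod_Suc)
lemma decode_7: "decode (7 + 8*k) = Mu (decode k)"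
  by (subst decode.simps) (simp add: mod_Suc)

lemma decode_enc[simp]: "decode (enc p) = p"
proof (induction p)
  case Zero show ?case using decode_0[of 0] by simp
next
  case Succ show ?case using decode_1[of 0] by simp
next
  case Left show ?case using decode_2[of 0] by simp
next
  case Right show ?case using decode_3[of 0] by simp
qed (simp_all add: decode_4 decode_5 decode_6 decode_7)

lemma phi_ev: assumes "ev (decode e) x y" shows "phi e x = Some y"
proof -
  have "(THE y. ev (decode e) x y) = y"
    by (rule the_equality) (use assms ev_det in blast)+
  then show ?thesis unfolding phi_def using assms by auto
qed

lemma phi_Some: "phi e x = Some y \<longleftrightarrow> ev (decode e) x y"
proof
  assume h: "phi e x = Some y"
  then have ex: "\<exists>y. ev (decode e) x y" unfolding phi_def by (auto split: if_splits)
  then obtain y' where "ev (decode e) x y'" by blast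
  with phi_ev h show "ev (decode e) x y" by simp
qed (rule phi_ev)

lemma phi_None: "phi e x \<noteq> None \<longleftrightarrow> (\<exists>y. ev (decode e) x y)"
  unfolding phi_def by simp

definition rec1 :: "(nat \<Rightarrow> nat) \<Rightarrow> bool" where
  "rec1 f \<longleftrightarrow> (\<exists>p. \<forall>x. ev p x (f x))"

lemma rec1_total_computable: "rec1 f \<Longrightarrow> total_computable f"
  unfolding rec1_def total_computable_def
  by (metis decode_enc phi_ev)

lemma rec1_id: "rec1 (\<lambda>x. x)"
  unfolding rec1_def
  by (rule exI[of _ "Pair Left Right"]) (metis ev_Left ev_Pair ev_Right prod.collapse prod_decode_inverse)

primrec cprog :: "nat \<Rightarrow> rf" where
  "cprog 0 = Zero"
| "cprog (Suc n) = Comp Succ (cprog n)"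

lemma ev_cprog: "ev (cprog n) x n"
  by (induction n) (auto intro: ev.intros)

lemma rec1_const: "rec1 (\<lambda>x. c)"
  unfolding rec1_def using ev_cprog by blast

lemma rec1_comp: "rec1 f \<Longrightarrow> rec1 g \<Longrightarrow> rec1 (\<lambda>x. f (g x))"
  unfolding rec1_def by (meson ev_Comp)

lemma rec1_pair: "rec1 f \<Longrightarrow> rec1 g \<Longrightarrow> rec1 (\<lambda>x. prod_encode (f x, g x))"
  unfolding rec1_def by (meson ev_Pair)

lemma rec1_fst: "rec1 f \<Longrightarrow> rec1 (\<lambda>x. fst (prod_decode (f x)))"
  unfolding rec1_def by (meson ev_Comp ev_Left)

lemma rec1_snd: "rec1 f \<Longrightarrow> rec1 (\<lambda>x. snd (prod_decode (f x)))"
  unfolding rec1_def by (meson ev_Comp ev_Right)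

lemma rec1_Suc: "rec1 f \<Longrightarrow> rec1 (\<lambda>x. Suc (f x))"
  unfolding rec1_def by (meson ev_Comp ev_Succ)

primrec natrec :: "(nat \<Rightarrow> nat) \<Rightarrow> (nat \<Rightarrow> nat) \<Rightarrow> nat \<Rightarrow> nat \<Rightarrow> nat" where
  "natrec f g 0 y = f y"
| "natrec f g (Suc n) y = g (prod_encode (n, prod_encode (natrec f g n y, y)))"

lemma rec1_natrec0:
  assumes "rec1 f" "rec1 g"
  shows "rec1 (\<lambda>x. natrec f g (fst (prod_decode x)) (snd (prod_decode x)))"
proof -
  from assms obtain pf pg where pf: "\<And>x. ev pf x (f x)" and pg: "\<And>x. ev pg x (g x)"
    unfolding rec1_def by blast
  have h: "ev (Rec pf pg) (prod_encode (n, y)) (natrec f g n y)" for n y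
  proof (induction n)
    case 0 then show ?case using ev_Rec0[OF pf] by simp
  next
    case (Suc n) then show ?case using ev_RecS[OF Suc pg] by simp
  qed
  have "\<forall>x. ev (Rec pf pg) x (natrec f g (fst (prod_decode x)) (snd (prod_decode x)))"
    using h by (metis prod.collapse prod_decode_inverse)
  then show ?thesis unfolding rec1_def by (rule exI)
qed

lemma rec1_natrec:
  assumes "rec1 f" "rec1 g" "rec1 n" "rec1 e"
  shows "rec1 (\<lambda>x. natrec f g (n x) (e x))"
  using rec1_comp[OF rec1_natrec0[OF assms(1,2)] rec1_pair[OF assms(3,4)]] by (simp only: prod_encode_inverse fst_conv snd_conv)

definition decP :: "(nat \<Rightarrow> bool) \<Rightarrow> bool" where
  "decP P \<longleftrightarrow> rec1 (\<lambda>x. if P x then 1 else 0)"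

lemma rec1_ext: "rec1 f \<Longrightarrow> (\<And>x. f x = g x) \<Longrightarrow> rec1 g"
proof -
  assume "rec1 f" "\<And>x. f x = g x"
  then have "f = g" by auto
  with \<open>rec1 f\<close> show ?thesis by simp
qed

lemma decP_ext: "decP P \<Longrightarrow> (\<And>x. P x = Q x) \<Longrightarrow> decP Q"
proof -
  assume "decP P" "\<And>x. P x = Q x"
  then have "P = Q" by auto
  with \<open>decP P\<close> show ?thesis by simp
qed

lemma rec1_if:
  assumes "decP P" "rec1 f" "rec1 g"
  shows "rec1 (\<lambda>x. if P x then f x else g x)"
proof -
  have c: "rec1 (\<lambda>x. if P x then 1 else 0)" using assms(1) unfolding decP_def .
  have "rec1 (\<lambda>x. natrec (\<lambda>y. snd (prod_decode y)) (\<lambda>z. fst (prod_decode (snd (prod_decode (snd (prod_decode z))))))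
           (if P x then 1 else 0) (prod_encode (f x, g x)))"
    by (intro rec1_natrec rec1_snd rec1_fst rec1_id c rec1_pair assms(2,3))
  then show ?thesis by (rule rec1_ext) simp
qed

lemma rec1_add: "rec1 f \<Longrightarrow> rec1 g \<Longrightarrow> rec1 (\<lambda>x. f x + g x)"
proof -
  assume a: "rec1 f" "rec1 g"
  have "rec1 (\<lambda>x. natrec (\<lambda>y. y) (\<lambda>z. Suc (fst (prod_decode (snd (prod_decode z))))) (g x) (f x))"
    by (intro rec1_natrec rec1_Suc rec1_snd rec1_fst rec1_id a)
  moreover have "natrec (\<lambda>y. y) (\<lambda>z. Suc (fst (prod_decode (snd (prod_decode z))))) n m = m + n" for n m
    by (induction n) auto
  ultimately show ?thesis by (rule rec1_ext)
qed

lemma rec1_pred: "rec1 f \<Longrightarrow> rec1 (\<lambda>x. f x - 1)"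
proof -
  assume a: "rec1 f"
  have "rec1 (\<lambda>x. natrec (\<lambda>y. 0) (\<lambda>z. fst (prod_decode z)) (f x) 0)"
    by (intro rec1_natrec rec1_fst rec1_id a rec1_const)
  moreover have "natrec (\<lambda>y. 0) (\<lambda>z. fst (prod_decode z)) n m = n - 1" for n m
    by (induction n) auto
  ultimately show ?thesis by (rule rec1_ext)
qed

lemma rec1_sub: "rec1 f \<Longrightarrow> rec1 g \<Longrightarrow> rec1 (\<lambda>x. f x - g x)"
proof -
  assume a: "rec1 f" "rec1 g"
  have "rec1 (\<lambda>x. natrec (\<lambda>y. y) (\<lambda>z. fst (prod_decode (snd (prod_decode z))) - 1) (g x) (f x))"
    by (intro rec1_natrec rec1_pred rec1_snd rec1_fst rec1_id a)
  moreover have "natrec (\<lambda>y. y) (\<lambda>z. fst (prod_decode (snd (prod_decode z))) - 1) n m = m - n" for n m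
    by (induction n) auto
  ultimately show ?thesis by (rule rec1_ext)
qed

lemma rec1_mult: "rec1 f \<Longrightarrow> rec1 g \<Longrightarrow> rec1 (\<lambda>x. f x * g x)"
proof -
  assume a: "rec1 f" "rec1 g"
  have "rec1 (\<lambda>x. natrec (\<lambda>y. 0) (\<lambda>z. fst (prod_decode (snd (prod_decode z))) + snd (prod_decode (snd (prod_decode z)))) (g x) (f x))"
    by (intro rec1_natrec rec1_add rec1_snd rec1_fst rec1_id a rec1_const)
  moreover have "natrec (\<lambda>y. 0) (\<lambda>z. fst (prod_decode (snd (prod_decode z))) + snd (prod_decode (snd (prod_decode z)))) n m = m * n" for n m
    by (induction n) auto
  ultimately show ?thesis by (rule rec1_ext)
qed

lemma decP_eq: "rec1 f \<Longrightarrow> rec1 g \<Longrightarrow> decP (\<lambda>x. f x = g x)"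
  unfolding decP_def
  by (rule rec1_ext[where f="\<lambda>x. 1 - ((f x - g x) + (g x - f x))"]) (intro rec1_sub rec1_add rec1_const, auto)

lemma decP_less: "rec1 f \<Longrightarrow> rec1 g \<Longrightarrow> decP (\<lambda>x. f x < g x)"
  unfolding decP_def
  by (rule rec1_ext[where f="\<lambda>x. 1 - (1 - (g x - f x))"]) (intro rec1_sub rec1_const, auto)

lemma decP_not: "decP P \<Longrightarrow> decP (\<lambda>x. \<not> P x)"
  unfolding decP_def
  by (rule rec1_ext[where f="\<lambda>x. 1 - (if P x then 1 else 0)"]) (intro rec1_sub rec1_const, auto)

lemma decP_le: "rec1 f \<Longrightarrow> rec1 g \<Longrightarrow> decP (\<lambda>x. f x \<le> g x)"
  by (rule decP_ext[OF decP_not[OF decP_less[of g f]]]) auto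

lemma decP_neq: "rec1 f \<Longrightarrow> rec1 g \<Longrightarrow> decP (\<lambda>x. f x \<noteq> g x)"
  by (rule decP_not[OF decP_eq])

lemma decP_conj: "decP P \<Longrightarrow> decP Q \<Longrightarrow> decP (\<lambda>x. P x \<and> Q x)"
  unfolding decP_def
  by (rule rec1_ext[where f="\<lambda>x. (if P x then 1 else 0) * (if Q x then 1 else 0)"]) (intro rec1_mult, auto)

lemma decP_disj: "decP P \<Longrightarrow> decP Q \<Longrightarrow> decP (\<lambda>x. P x \<or> Q x)"
  by (rule decP_ext[OF decP_not[OF decP_conj[OF decP_not decP_not]]]) auto

lemma decP_imp: "decP P \<Longrightarrow> decP Q \<Longrightarrow> decP (\<lambda>x. P x \<longrightarrow> Q x)"
  by (rule decP_ext[OF decP_disj[OF decP_not]]) auto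

lemma decP_iff: "decP P \<Longrightarrow> decP Q \<Longrightarrow> decP (\<lambda>x. P x \<longleftrightarrow> Q x)"
  by (rule decP_ext[OF decP_conj[OF decP_imp[of P Q] decP_imp[of Q P]]]) auto

lemma decP_const: "decP (\<lambda>x. P)"
  unfolding decP_def by (cases P) (simp_all add: rec1_const)

lemma decP_ex_less:
  assumes P: "decP (\<lambda>p. P (fst (prod_decode p)) (snd (prod_decode p)))" and n: "rec1 n"
  shows "decP (\<lambda>x. \<exists>j<n x. P j x)"
proof -
  define G where "G = (\<lambda>z. if fst (prod_decode (snd (prod_decode z))) = 1 \<or>
     P (fst (prod_decode z)) (snd (prod_decode (snd (prod_decode z)))) then 1 else (0::nat))"
  have dP: "decP (\<lambda>z. P (fst (prod_decode z)) (snd (prod_decode (snd (prod_decode z)))))"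
    using rec1_comp[OF P[unfolded decP_def] rec1_pair[OF rec1_fst[OF rec1_id] rec1_snd[OF rec1_snd[OF rec1_id]]]]
    unfolding decP_def by simp
  have G: "rec1 G" unfolding G_def
    by (intro rec1_if decP_disj decP_eq rec1_const rec1_fst rec1_snd rec1_id dP)
  have "rec1 (\<lambda>x. natrec (\<lambda>y. 0) G (n x) x)"
    by (intro rec1_natrec rec1_const G n rec1_id)
  moreover have "natrec (\<lambda>y. 0) G m x = (if \<exists>j<m. P j x then 1 else 0)" for m x
    by (induction m) (auto simp: G_def less_Suc_eq)
  ultimately show ?thesis unfolding decP_def by (rule rec1_ext)
qed

lemma decP_all_less:
  assumes P: "decP (\<lambda>p. P (fst (prod_decode p)) (snd (prod_decode p)))" and n: "rec1 n"
  shows "decP (\<lambda>x. \<forall>j<n x. P j x)"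
  by (rule decP_ext[OF decP_not[OF decP_ex_less[OF decP_not[OF P] n]]]) auto

lemma decP_ex_le:
  assumes P: "decP (\<lambda>p. P (fst (prod_decode p)) (snd (prod_decode p)))" and n: "rec1 n"
  shows "decP (\<lambda>x. \<exists>j\<le>n x. P j x)"
  by (rule decP_ext[OF decP_ex_less[OF P rec1_Suc[OF n]]]) (auto simp: less_Suc_eq_le)

lemma decP_all_le:
  assumes P: "decP (\<lambda>p. P (fst (prod_decode p)) (snd (prod_decode p)))" and n: "rec1 n"
  shows "decP (\<lambda>x. \<forall>j\<le>n x. P j x)"
  by (rule decP_ext[OF decP_all_less[OF P rec1_Suc[OF n]]]) (auto simp: less_Suc_eq_le)

lemma divmod8_step: "Suc n div 8 = (if n mod 8 = 7 then Suc (n div 8) else n div 8) \<and>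
    Suc n mod 8 = (if n mod 8 = 7 then 0 else Suc (n mod 8))"
  by (auto simp: mod_Suc div_Suc)

lemma rec1_divmod8: "rec1 (\<lambda>x. prod_encode (x div 8, x mod 8))"
proof -
  define G where "G = (\<lambda>z. let s = fst (prod_decode (snd (prod_decode z))) in
     if snd (prod_decode s) = 7 then prod_encode (Suc (fst (prod_decode s)), 0)
     else prod_encode (fst (prod_decode s), Suc (snd (prod_decode s))))"
  have G: "rec1 G" unfolding G_def Let_def
    by (intro rec1_if decP_eq rec1_pair rec1_Suc rec1_const rec1_fst rec1_snd rec1_id)
  have "rec1 (\<lambda>x. natrec (\<lambda>y. prod_encode (0,0)) G x x)"
    by (intro rec1_natrec rec1_const G rec1_id)
  moreover have "natrec (\<lambda>y. prod_encode (0,0)) G m x = prod_encode (m div 8, m mod 8)" for m x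
    by (induction m) (auto simp: G_def divmod8_step)
  ultimately show ?thesis by (rule rec1_ext)
qed

lemma rec1_div8: "rec1 f \<Longrightarrow> rec1 (\<lambda>x. f x div 8)"
  using rec1_fst[OF rec1_comp[OF rec1_divmod8]] by simp

lemma rec1_mod8: "rec1 f \<Longrightarrow> rec1 (\<lambda>x. f x mod 8)"
  using rec1_snd[OF rec1_comp[OF rec1_divmod8]] by simp

lemmas rec1I = rec1_id rec1_const rec1_pair rec1_fst rec1_snd rec1_Suc rec1_if rec1_add rec1_sub
  rec1_mult rec1_pred rec1_div8 rec1_mod8
  decP_eq decP_less decP_le decP_not decP_conj decP_disj decP_imp decP_iff decP_const
  decP_ex_less decP_all_less decP_ex_le decP_all_le

lemma decP_comp: "decP P \<Longrightarrow> rec1 f \<Longrightarrow> decP (\<lambda>x. P (f x))"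
  unfolding decP_def by (drule rec1_comp) auto

definition tlc :: "nat \<Rightarrow> nat" where
  "tlc w = (if w = 0 then 0 else snd (prod_decode (w - 1)))"

definition hdc :: "nat \<Rightarrow> nat" where
  "hdc w = fst (prod_decode (w - 1))"

lemma list_decode_Suc': "w \<noteq> 0 \<Longrightarrow> list_decode w = hdc w # list_decode (tlc w)"
  by (cases w) (auto simp: hdc_def tlc_def split: prod.splits)

lemma list_decode_tlc: "list_decode (tlc w) = tl (list_decode w)"
  by (cases "w = 0") (auto simp: list_decode_Suc' tlc_def)

definition tli :: "nat \<Rightarrow> nat \<Rightarrow> nat" where
  "tli j w = (tlc ^^ j) w"

lemma list_decode_tli: "list_decode (tli j w) = drop j (list_decode w)"
  unfolding tli_def
  by (induction j) (auto simp: list_decode_tlc drop_Suc tl_drop)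

lemma tli_zero_iff: "tli j w = 0 \<longleftrightarrow> length (list_decode w) \<le> j"
proof -
  have "tli j w = 0 \<longleftrightarrow> list_decode (tli j w) = []"
    by (metis list_decode.simps(1) list_decode_inverse)
  then show ?thesis by (simp add: list_decode_tli)
qed

lemma rec1_tlc: "rec1 f \<Longrightarrow> rec1 (\<lambda>x. tlc (f x))"
  unfolding tlc_def by (intro rec1I) 

lemma rec1_hdc: "rec1 f \<Longrightarrow> rec1 (\<lambda>x. hdc (f x))"
  unfolding hdc_def by (intro rec1I) 

lemma rec1_tli: "rec1 f \<Longrightarrow> rec1 g \<Longrightarrow> rec1 (\<lambda>x. tli (f x) (g x))"
proof -
  assume a: "rec1 f" "rec1 g"
  have "rec1 (\<lambda>x. natrec (\<lambda>y. y) (\<lambda>z. tlc (fst (prod_decode (snd (prod_decode z))))) (f x) (g x))"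
    by (intro rec1_natrec rec1_tlc rec1I a)
  moreover have "natrec (\<lambda>y. y) (\<lambda>z. tlc (fst (prod_decode (snd (prod_decode z))))) n m = tli n m" for n m
    by (induction n) (auto simp: tli_def)
  ultimately show ?thesis by (rule rec1_ext)
qed

definition llen :: "nat \<Rightarrow> nat" where
  "llen w = length (list_decode w)"

definition lnth :: "nat \<Rightarrow> nat \<Rightarrow> nat" where
  "lnth w j = (if j < llen w then list_decode w ! j else 0)"

lemma length_list_decode_le: "length (list_decode w) \<le> w"
proof (induction w rule: list_decode.induct)
  case (2 n)
  obtain x y where xy: "prod_decode n = (x, y)" by (cases "prod_decode n")
  then have "y \<le> n" by (metis le_prod_encode_2 prod_decode_inverse)
  with 2 xy show ?case by auto
qed simp

lemma rec1_llen: "rec1 f \<Longrightarrow> rec1 (\<lambda>x. llen (f x))"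
proof -
  assume a: "rec1 f"
  define G where "G = (\<lambda>z. fst (prod_decode (snd (prod_decode z))) +
     (if tli (fst (prod_decode z)) (snd (prod_decode (snd (prod_decode z)))) = 0 then 0 else 1))"
  have G: "rec1 G" unfolding G_def by (intro rec1I rec1_tli)
  have "rec1 (\<lambda>x. natrec (\<lambda>y. 0) G (f x) (f x))"
    by (intro rec1_natrec G rec1I a)
  moreover have "natrec (\<lambda>y. 0) G n w = min n (llen w)" for n w
    by (induction n) (auto simp: G_def tli_zero_iff llen_def)
  ultimately show ?thesis
    by (elim rec1_ext) (simp add: llen_def length_list_decode_le min_absorb2)
qed

lemma hdc_tli: "j < length (list_decode w) \<Longrightarrow> hdc (tli j w) = list_decode w ! j"
proof -
  assume j: "j < length (list_decode w)"
  then have "tli j w \<noteq> 0" by (simp add: tli_zero_iff)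
  then have "list_decode (tli j w) = hdc (tli j w) # list_decode (tlc (tli j w))"
    by (rule list_decode_Suc')
  then show ?thesis using j by (simp add: list_decode_tli hd_drop_conv_nth[symmetric])
qed

lemma rec1_lnth: "rec1 f \<Longrightarrow> rec1 g \<Longrightarrow> rec1 (\<lambda>x. lnth (f x) (g x))"
proof -
  assume a: "rec1 f" "rec1 g"
  have "rec1 (\<lambda>x. if g x < llen (f x) then hdc (tli (g x) (f x)) else 0)"
    by (intro rec1I rec1_hdc rec1_tli rec1_llen a)
  then show ?thesis by (rule rec1_ext) (simp add: lnth_def hdc_tli llen_def)
qed

lemma llen_enc[simp]: "llen (list_encode ws) = length ws"
  by (simp add: llen_def)

lemma lnth_enc[simp]: "j < length ws \<Longrightarrow> lnth (list_encode ws) j = ws ! j"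
  by (simp add: lnth_def)

lemma bex_set_nth: "(\<exists>t\<in>set xs. P t) \<longleftrightarrow> (\<exists>j<length xs. P (xs!j))"
  by (metis in_set_conv_nth)

lemma bex_take_lnth:
  "(\<exists>t\<in>set (take i (list_decode w)). P t) \<longleftrightarrow> (\<exists>j<min i (llen w). P (lnth w j))"
proof -
  have "(\<exists>t\<in>set (take i (list_decode w)). P t) \<longleftrightarrow>
      (\<exists>j<length (take i (list_decode w)). P (take i (list_decode w) ! j))"
    by (rule bex_set_nth)
  also have "\<dots> \<longleftrightarrow> (\<exists>j<min i (llen w). P (lnth w j))"
    unfolding length_take llen_def lnth_def
    by (intro ex_cong1 conj_cong) (simp_all add: min_less_iff_conj conj_commute)
  finally show ?thesis .
qed

lemma ball_take_lnth:
  "(\<forall>t\<in>set (take i (list_decode w)). P t) \<longleftrightarrow> (\<forall>j<min i (llen w). P (lnth w j))"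
  using bex_take_lnth[of i w "\<lambda>t. \<not> P t"] by blast

definition cp :: "nat \<Rightarrow> nat" where "cp t = fst (prod_decode t)"
definition xp :: "nat \<Rightarrow> nat" where "xp t = fst (prod_decode (snd (prod_decode t)))"
definition yp :: "nat \<Rightarrow> nat" where "yp t = snd (prod_decode (snd (prod_decode t)))"
definition ent :: "nat \<Rightarrow> nat \<Rightarrow> nat \<Rightarrow> nat" where "ent c x y = prod_encode (c, prod_encode (x, y))"

lemma ent_simps[simp]: "cp (ent c x y) = c" "xp (ent c x y) = x" "yp (ent c x y) = y"
  by (simp_all add: cp_def xp_def yp_def ent_def)

lemma ent_cp: "ent (cp t) (xp t) (yp t) = t"
  by (simp add: cp_def xp_def yp_def ent_def)

lemma ent_eq_iff: "t = ent c x y \<longleftrightarrow> cp t = c \<and> xp t = x \<and> yp t = y"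
proof
  assume "cp t = c \<and> xp t = x \<and> yp t = y"
  then show "t = ent c x y" using ent_cp[of t] by simp
qed simp

definition c1 :: "nat \<Rightarrow> nat" where "c1 c = fst (prod_decode (c div 8))"
definition c2 :: "nat \<Rightarrow> nat" where "c2 c = snd (prod_decode (c div 8))"

definition justP :: "nat set \<Rightarrow> nat \<Rightarrow> nat \<Rightarrow> nat \<Rightarrow> bool" where
  "justP S c x y \<longleftrightarrow>
    (c mod 8 = 0 \<and> y = 0) \<or> (c mod 8 = 1 \<and> y = Suc x) \<or>
    (c mod 8 = 2 \<and> y = fst (prod_decode x)) \<or> (c mod 8 = 3 \<and> y = snd (prod_decode x)) \<or>
    (c mod 8 = 4 \<and> (\<exists>t\<in>S. cp t = c2 c \<and> xp t = x \<and> (\<exists>u\<in>S. cp u = c1 c \<and> xp u = yp t \<and> yp u = y))) \<or>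
    (c mod 8 = 5 \<and> (\<exists>t\<in>S. cp t = c1 c \<and> xp t = x \<and> (\<exists>u\<in>S. cp u = c2 c \<and> xp u = x \<and> y = prod_encode (yp t, yp u)))) \<or>
    (c mod 8 = 6 \<and> fst (prod_decode x) = 0 \<and> (\<exists>t\<in>S. cp t = c1 c \<and> xp t = snd (prod_decode x) \<and> yp t = y)) \<or>
    (c mod 8 = 6 \<and> fst (prod_decode x) \<noteq> 0 \<and> (\<exists>t\<in>S. cp t = c \<and> xp t = prod_encode (fst (prod_decode x) - 1, snd (prod_decode x)) \<and>
        (\<exists>u\<in>S. cp u = c2 c \<and> xp u = prod_encode (fst (prod_decode x) - 1, prod_encode (yp t, snd (prod_decode x))) \<and> yp u = y))) \<or>
    (c mod 8 = 7 \<and> (\<exists>t\<in>S. cp t = c div 8 \<and> xp t = prod_encode (y, x) \<and> yp t = 0) \<and>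
        (\<forall>z<y. \<exists>t\<in>S. cp t = c div 8 \<and> xp t = prod_encode (z, x) \<and> yp t \<noteq> 0))"

definition just :: "nat set \<Rightarrow> nat \<Rightarrow> bool" where
  "just S e \<longleftrightarrow> justP S (cp e) (xp e) (yp e)"

lemma justP_mono: assumes "justP S c x y" "S \<subseteq> S'" shows "justP S' c x y"
proof -
  from assms(1) show ?thesis unfolding justP_def
    apply (elim disjE)
    subgoal apply (rule disjI1) using assms(2) by blast
    subgoal apply (rule disjI2) apply (rule disjI1) using assms(2) by blast
    subgoal apply (rule disjI2) apply (rule disjI2) apply (rule disjI1) using assms(2) by blast
    subgoal apply (rule disjI2) apply (rule disjI2) apply (rule disjI2) apply (rule disjI1) using assms(2) by blast
    subgoal apply (rule disjI2) apply (rule disjI2) apply (rule disjI2) apply (rule disjI2) apply (rule disjI1) using assms(2) by blast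
    subgoal apply (rule disjI2) apply (rule disjI2) apply (rule disjI2) apply (rule disjI2) apply (rule disjI2) apply (rule disjI1) using assms(2) by blast
    subgoal apply (rule disjI2) apply (rule disjI2) apply (rule disjI2) apply (rule disjI2) apply (rule disjI2) apply (rule disjI2) apply (rule disjI1) using assms(2) by blast
    subgoal apply (rule disjI2) apply (rule disjI2) apply (rule disjI2) apply (rule disjI2) apply (rule disjI2) apply (rule disjI2) apply (rule disjI2) apply (rule disjI1) using assms(2) by blast
    subgoal apply (rule disjI2) apply (rule disjI2) apply (rule disjI2) apply (rule disjI2) apply (rule disjI2) apply (rule disjI2) apply (rule disjI2) apply (rule disjI2) using assms(2) by blast
    done
qed

definition sem :: "nat \<Rightarrow> bool" where
  "sem t \<longleftrightarrow> ev (decode (cp t)) (xp t) (yp t)"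

lemma decode_mod: "c mod 8 = m \<Longrightarrow> decode c = (if m = 0 then Zero else if m = 1 then Succ else if m = 2 then Left
   else if m = 3 then Right else if m = 4 then Comp (decode (c1 c)) (decode (c2 c))
   else if m = 5 then Pair (decode (c1 c)) (decode (c2 c))
   else if m = 6 then Rec (decode (c1 c)) (decode (c2 c)) else Mu (decode (c div 8)))"
  by (subst decode.simps) (simp add: c1_def c2_def)

lemma justP_sound:
  assumes S: "\<forall>t\<in>S. sem t" and j: "justP S c x y"
  shows "ev (decode c) x y"
proof -
  have S': "\<And>t. t \<in> S \<Longrightarrow> ev (decode (cp t)) (xp t) (yp t)" using S sem_def by blast
  have xd: "x = prod_encode (fst (prod_decode x), snd (prod_decode x))" by simp
  from j[unfolded justP_def] show ?thesis
  proof (elim disjE)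
    assume "c mod 8 = 0 \<and> y = 0" then show ?thesis using decode_mod[of c 0] by (simp add: ev_Zero)
  next
    assume "c mod 8 = 1 \<and> y = Suc x" then show ?thesis using decode_mod[of c 1] by (simp add: ev_Succ)
  next
    assume "c mod 8 = 2 \<and> y = fst (prod_decode x)" then show ?thesis using decode_mod[of c 2] by (simp add: ev_Left)
  next
    assume "c mod 8 = 3 \<and> y = snd (prod_decode x)" then show ?thesis using decode_mod[of c 3] by (simp add: ev_Right)
  next
    assume "c mod 8 = 4 \<and> (\<exists>t\<in>S. cp t = c2 c \<and> xp t = x \<and> (\<exists>u\<in>S. cp u = c1 c \<and> xp u = yp t \<and> yp u = y))"
    then obtain t u where "c mod 8 = 4" "t \<in> S" "cp t = c2 c" "xp t = x" "u \<in> S" "cp u = c1 c" "xp u = yp t" "yp u = y"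
      by blast
    then show ?thesis using decode_mod[of c 4] S'[of t] S'[of u] by (auto intro: ev_Comp)
  next
    assume "c mod 8 = 5 \<and> (\<exists>t\<in>S. cp t = c1 c \<and> xp t = x \<and> (\<exists>u\<in>S. cp u = c2 c \<and> xp u = x \<and> y = prod_encode (yp t, yp u)))"
    then obtain t u where "c mod 8 = 5" "t \<in> S" "cp t = c1 c" "xp t = x" "u \<in> S" "cp u = c2 c" "xp u = x"
      "y = prod_encode (yp t, yp u)" by blast
    then show ?thesis using decode_mod[of c 5] S'[of t] S'[of u] by (auto intro: ev_Pair)
  next
    assume "c mod 8 = 6 \<and> fst (prod_decode x) = 0 \<and> (\<exists>t\<in>S. cp t = c1 c \<and> xp t = snd (prod_decode x) \<and> yp t = y)"
    then obtain t where a: "c mod 8 = 6" "fst (prod_decode x) = 0" "t \<in> S" "cp t = c1 c" "xp t = snd (prod_decode x)" "yp t = y"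
      by blast
    then have "ev (Rec (decode (c1 c)) (decode (c2 c))) (prod_encode (0, snd (prod_decode x))) y"
      using S'[of t] by (auto intro: ev_Rec0)
    moreover have "decode c = Rec (decode (c1 c)) (decode (c2 c))" using decode_mod[of c 6] a(1) by simp
    ultimately show ?thesis using xd a(2) by simp
  next
    assume "c mod 8 = 6 \<and> fst (prod_decode x) \<noteq> 0 \<and> (\<exists>t\<in>S. cp t = c \<and> xp t = prod_encode (fst (prod_decode x) - 1, snd (prod_decode x)) \<and>
        (\<exists>u\<in>S. cp u = c2 c \<and> xp u = prod_encode (fst (prod_decode x) - 1, prod_encode (yp t, snd (prod_decode x))) \<and> yp u = y))"
    then obtain t u where a: "c mod 8 = 6" "fst (prod_decode x) \<noteq> 0" "t \<in> S" "cp t = c"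
      "xp t = prod_encode (fst (prod_decode x) - 1, snd (prod_decode x))"
      "u \<in> S" "cp u = c2 c" "xp u = prod_encode (fst (prod_decode x) - 1, prod_encode (yp t, snd (prod_decode x)))"
      "yp u = y" by blast
    have dc: "decode c = Rec (decode (c1 c)) (decode (c2 c))" using decode_mod[of c 6] a(1) by simp
    have "ev (decode c) (prod_encode (Suc (fst (prod_decode x) - 1), snd (prod_decode x))) y"
      unfolding dc
      by (rule ev_RecS) (use S'[of t] S'[of u] a dc in auto)
    then show ?thesis using a(2) by simp
  next
    assume "c mod 8 = 7 \<and> (\<exists>t\<in>S. cp t = c div 8 \<and> xp t = prod_encode (y, x) \<and> yp t = 0) \<and>
        (\<forall>z<y. \<exists>t\<in>S. cp t = c div 8 \<and> xp t = prod_encode (z, x) \<and> yp t \<noteq> 0)"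
    then have a: "c mod 8 = 7" "\<exists>t\<in>S. cp t = c div 8 \<and> xp t = prod_encode (y, x) \<and> yp t = 0"
      "\<forall>z<y. \<exists>t\<in>S. cp t = c div 8 \<and> xp t = prod_encode (z, x) \<and> yp t \<noteq> 0" by blast+
    have dc: "decode c = Mu (decode (c div 8))" using decode_mod[of c 7] a(1) by simp
    show ?thesis unfolding dc
    proof (rule ev_Mu)
      from a(2) obtain t where t: "t \<in> S" "cp t = c div 8" "xp t = prod_encode (y, x)" "yp t = 0" by blast
      show "ev (decode (c div 8)) (prod_encode (y, x)) 0" using S'[OF t(1)] t by simp
      show "\<forall>z<y. \<exists>v. v \<noteq> 0 \<and> ev (decode (c div 8)) (prod_encode (z, x)) v"
      proof (intro allI impI)
        fix z assume "z < y"
        with a(3) obtain t where t: "t \<in> S" "cp t = c div 8" "xp t = prod_encode (z, x)" "yp t \<noteq> 0" by blast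
        show "\<exists>v. v \<noteq> 0 \<and> ev (decode (c div 8)) (prod_encode (z, x)) v"
          using S'[OF t(1)] t by auto
      qed
    qed
  qed
qed

definition validL :: "nat list \<Rightarrow> bool" where
  "validL ws \<longleftrightarrow> (\<forall>i<length ws. just (set (take i ws)) (ws ! i))"

lemma validL_sound: "validL ws \<Longrightarrow> t \<in> set ws \<Longrightarrow> sem t"
proof -
  assume v: "validL ws"
  have "\<forall>j<i. j < length ws \<longrightarrow> sem (ws ! j)" for i
  proof (induction i)
    case (Suc i)
    show ?case
    proof (intro allI impI)
      fix j assume j: "j < Suc i" "j < length ws"
      show "sem (ws ! j)"
      proof (cases "j < i")
        case True then show ?thesis using Suc j by auto
      next
        case False
        then have ji: "j = i" using j by auto
        have "\<forall>t\<in>set (take i ws). sem t"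
          using Suc j ji by (auto simp: in_set_conv_nth)
        moreover have "just (set (take i ws)) (ws ! i)" using v j ji unfolding validL_def by auto
        ultimately have "ev (decode (cp (ws ! i))) (xp (ws ! i)) (yp (ws ! i))"
          unfolding just_def by (rule justP_sound)
        then show ?thesis by (simp add: sem_def ji)
      qed
    qed
  qed simp
  then show "t \<in> set ws \<Longrightarrow> sem t" by (metis in_set_conv_nth lessI)
qed

lemma validL_append: "validL a \<Longrightarrow> validL b \<Longrightarrow> validL (a @ b)"
  unfolding validL_def
proof (intro allI impI)
  fix i assume va: "\<forall>i<length a. just (set (take i a)) (a ! i)"
    and vb: "\<forall>i<length b. just (set (take i b)) (b ! i)" and i: "i < length (a @ b)"
  show "just (set (take i (a @ b))) ((a @ b) ! i)"
  proof (cases "i < length a")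
    case True then show ?thesis using va by (simp add: nth_append)
  next
    case False
    then have "i - length a < length b" using i by simp
    then have "just (set (take (i - length a) b)) (b ! (i - length a))" using vb by simp
    moreover have "set (take (i - length a) b) \<subseteq> set (take i (a @ b))" using False by auto
    ultimately show ?thesis using False unfolding just_def
      by (simp add: nth_append justP_mono)
  qed
qed

lemma validL_snoc: assumes "validL a" "just (set a) e" shows "validL (a @ [e])"
  unfolding validL_def
proof (intro allI impI)
  fix i assume i: "i < length (a @ [e])"
  show "just (set (take i (a @ [e]))) ((a @ [e]) ! i)"
  proof (cases "i < length a")
    case True then show ?thesis using assms(1) unfolding validL_def by (simp add: nth_append)
  next
    case False then have "i = length a" using i by simp
    then show ?thesis using assms(2) by simp
  qed
qed

lemma validL_Nil: "validL []" by (simp add: validL_def)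

lemma decode_inv:
  "decode c = Zero \<Longrightarrow> c mod 8 = 0"
  "decode c = Succ \<Longrightarrow> c mod 8 = 1"
  "decode c = Left \<Longrightarrow> c mod 8 = 2"
  "decode c = Right \<Longrightarrow> c mod 8 = 3"
  "decode c = Comp f g \<Longrightarrow> c mod 8 = 4 \<and> decode (c1 c) = f \<and> decode (c2 c) = g"
  "decode c = Pair f g \<Longrightarrow> c mod 8 = 5 \<and> decode (c1 c) = f \<and> decode (c2 c) = g"
  "decode c = Rec f g \<Longrightarrow> c mod 8 = 6 \<and> decode (c1 c) = f \<and> decode (c2 c) = g"
  "decode c = Mu f \<Longrightarrow> c mod 8 = 7 \<and> decode (c div 8) = f"
  using decode_mod[of c "c mod 8"] by (auto split: if_splits)

lemma justP_I0: "c mod 8 = 0 \<Longrightarrow> justP S c x 0"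
  unfolding justP_def by simp
lemma justP_I1: "c mod 8 = 1 \<Longrightarrow> justP S c x (Suc x)"
  unfolding justP_def by simp
lemma justP_I2: "c mod 8 = 2 \<Longrightarrow> justP S c x (fst (prod_decode x))"
  unfolding justP_def by simp
lemma justP_I3: "c mod 8 = 3 \<Longrightarrow> justP S c x (snd (prod_decode x))"
  unfolding justP_def by simp
lemma justP_I4: "c mod 8 = 4 \<Longrightarrow> ent (c2 c) x y \<in> S \<Longrightarrow> ent (c1 c) y z \<in> S \<Longrightarrow> justP S c x z"
  unfolding justP_def
  apply (rule disjI2, rule disjI2, rule disjI2, rule disjI2, rule disjI1)
  apply (rule conjI, simp)
  apply (rule bexI[of _ "ent (c2 c) x y"])
   apply (auto intro!: bexI[of _ "ent (c1 c) y z"])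
  done
lemma justP_I5: "c mod 8 = 5 \<Longrightarrow> ent (c1 c) x y \<in> S \<Longrightarrow> ent (c2 c) x z \<in> S \<Longrightarrow> justP S c x (prod_encode (y, z))"
  unfolding justP_def
  apply (rule disjI2, rule disjI2, rule disjI2, rule disjI2, rule disjI2, rule disjI1)
  apply (rule conjI, simp)
  apply (rule bexI[of _ "ent (c1 c) x y"])
   apply (auto intro!: bexI[of _ "ent (c2 c) x z"])
  done
lemma justP_I6: "c mod 8 = 6 \<Longrightarrow> ent (c1 c) x y \<in> S \<Longrightarrow> justP S c (prod_encode (0, x)) y"
  unfolding justP_def
  apply (rule disjI2, rule disjI2, rule disjI2, rule disjI2, rule disjI2, rule disjI2, rule disjI1)
  apply (intro conjI bexI[of _ "ent (c1 c) x y"]) apply simp_all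
  done
lemma justP_I6S: "c mod 8 = 6 \<Longrightarrow> ent c (prod_encode (n, x)) y \<in> S \<Longrightarrow>
    ent (c2 c) (prod_encode (n, prod_encode (y, x))) z \<in> S \<Longrightarrow> justP S c (prod_encode (Suc n, x)) z"
  unfolding justP_def
  apply (rule disjI2, rule disjI2, rule disjI2, rule disjI2, rule disjI2, rule disjI2, rule disjI2, rule disjI1)
  apply (rule conjI, simp, rule conjI, simp)
  apply (rule bexI[of _ "ent c (prod_encode (n, x)) y"])
   apply (auto intro!: bexI[of _ "ent (c2 c) (prod_encode (n, prod_encode (y, x))) z"])
  done
lemma justP_I7: "c mod 8 = 7 \<Longrightarrow> ent (c div 8) (prod_encode (y, x)) 0 \<in> S \<Longrightarrow>
    (\<forall>z<y. \<exists>v. v \<noteq> 0 \<and> ent (c div 8) (prod_encode (z, x)) v \<in> S) \<Longrightarrow> justP S c x y"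
  unfolding justP_def
  apply (rule disjI2, rule disjI2, rule disjI2, rule disjI2, rule disjI2, rule disjI2, rule disjI2, rule disjI2)
  apply (intro conjI bexI[of _ "ent (c div 8) (prod_encode (y, x)) 0"]) apply simp_all
  apply (intro allI impI)
  subgoal for z
    apply (drule spec[of _ z]) apply (erule impE, assumption) apply (elim exE conjE)
    subgoal for v by (rule bexI[of _ "ent (c div 8) (prod_encode (z, x)) v"]) simp_all
    done
  done

lemma validL_single: "just {} e \<Longrightarrow> validL [e]"
  using validL_snoc[OF validL_Nil] by simp

lemma validL_add: "validL ws \<Longrightarrow> justP (set ws) c x y \<Longrightarrow> \<exists>ws'. validL ws' \<and> ent c x y \<in> set ws'"
  by (rule exI[of _ "ws @ [ent c x y]"]) (simp add: validL_snoc just_def)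

lemma ev_complete:
  "ev p x y \<Longrightarrow> decode c = p \<Longrightarrow> \<exists>ws. validL ws \<and> ent c x y \<in> set ws"
proof (induction arbitrary: c rule: ev.induct)
  case (ev_Zero x)
  show ?case by (rule validL_add[OF validL_Nil justP_I0]) (use decode_inv(1) ev_Zero in blast)
next
  case (ev_Succ x)
  show ?case by (rule validL_add[OF validL_Nil justP_I1]) (use decode_inv(2) ev_Succ in blast)
next
  case (ev_Left x)
  show ?case by (rule validL_add[OF validL_Nil justP_I2]) (use decode_inv(3) ev_Left in blast)
next
  case (ev_Right x)
  show ?case by (rule validL_add[OF validL_Nil justP_I3]) (use decode_inv(4) ev_Right in blast)
next
  case (ev_Comp g x y f z)
  note d = decode_inv(5)[OF ev_Comp.prems]
  obtain w1 where w1: "validL w1" "ent (c2 c) x y \<in> set w1" using ev_Comp.IH(1) d by blast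
  obtain w2 where w2: "validL w2" "ent (c1 c) y z \<in> set w2" using ev_Comp.IH(2) d by blast
  show ?case by (rule validL_add[OF validL_append[OF w1(1) w2(1)] justP_I4]) (use d w1 w2 in auto)
next
  case (ev_Pair f x y g z)
  note d = decode_inv(6)[OF ev_Pair.prems]
  obtain w1 where w1: "validL w1" "ent (c1 c) x y \<in> set w1" using ev_Pair.IH(1) d by blast
  obtain w2 where w2: "validL w2" "ent (c2 c) x z \<in> set w2" using ev_Pair.IH(2) d by blast
  show ?case by (rule validL_add[OF validL_append[OF w1(1) w2(1)] justP_I5]) (use d w1 w2 in auto)
next
  case (ev_Rec0 f x y g)
  note d = decode_inv(7)[OF ev_Rec0.prems]
  obtain w1 where w1: "validL w1" "ent (c1 c) x y \<in> set w1" using ev_Rec0.IH d by blast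
  show ?case by (rule validL_add[OF w1(1) justP_I6]) (use d w1 in auto)
next
  case (ev_RecS f g n x y z)
  note d = decode_inv(7)[OF ev_RecS.prems]
  obtain w1 where w1: "validL w1" "ent c (prod_encode (n, x)) y \<in> set w1" using ev_RecS.IH(1) ev_RecS.prems by blast
  obtain w2 where w2: "validL w2" "ent (c2 c) (prod_encode (n, prod_encode (y, x))) z \<in> set w2"
    using ev_RecS.IH(2) d by blast
  show ?case by (rule validL_add[OF validL_append[OF w1(1) w2(1)] justP_I6S]) (use d w1 w2 in auto)
next
  case (ev_Mu f y x)
  note d = decode_inv(8)[OF ev_Mu.prems]
  obtain w1 where w1: "validL w1" "ent (c div 8) (prod_encode (y, x)) 0 \<in> set w1" using ev_Mu.IH(1) d by blast
  have "\<exists>ws. validL ws \<and> (\<forall>z<m. \<exists>v. v \<noteq> 0 \<and> ent (c div 8) (prod_encode (z, x)) v \<in> set ws)" if "m \<le> y" for m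
    using that
  proof (induction m)
    case 0 show ?case using validL_Nil by blast
  next
    case (Suc m)
    then obtain ws where ws: "validL ws" "\<forall>z<m. \<exists>v. v \<noteq> 0 \<and> ent (c div 8) (prod_encode (z, x)) v \<in> set ws" by auto
    from ev_Mu.IH(2) Suc.prems obtain v where v: "v \<noteq> 0"
      "\<forall>c'. decode c' = f \<longrightarrow> (\<exists>ws. validL ws \<and> ent c' (prod_encode (m, x)) v \<in> set ws)"
      by (meson Suc_le_lessD)
    then obtain ws2 where ws2: "validL ws2" "ent (c div 8) (prod_encode (m, x)) v \<in> set ws2" using d by blast
    show ?case
    proof (intro exI conjI)
      show "validL (ws @ ws2)" using ws ws2 validL_append by blast
      show "\<forall>z<Suc m. \<exists>v. v \<noteq> 0 \<and> ent (c div 8) (prod_encode (z, x)) v \<in> set (ws @ ws2)"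
      proof (intro allI impI)
        fix z assume "z < Suc m"
        then consider "z < m" | "z = m" by linarith
        then show "\<exists>v. v \<noteq> 0 \<and> ent (c div 8) (prod_encode (z, x)) v \<in> set (ws @ ws2)"
        proof cases
          case 1 then show ?thesis using ws(2) by auto
        next
          case 2 then show ?thesis using ws2 v by auto
        qed
      qed
    qed
  qed
  then obtain w2 where w2: "validL w2" "\<forall>z<y. \<exists>v. v \<noteq> 0 \<and> ent (c div 8) (prod_encode (z, x)) v \<in> set w2"
    by blast
  show ?case
  proof (rule validL_add[OF validL_append[OF w1(1) w2(1)] justP_I7])
    show "c mod 8 = 7" using d by simp
    show "ent (c div 8) (prod_encode (y, x)) 0 \<in> set (w1 @ w2)" using w1 by simp
    show "\<forall>z<y. \<exists>v. v \<noteq> 0 \<and> ent (c div 8) (prod_encode (z, x)) v \<in> set (w1 @ w2)" using w2 by auto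
  qed
qed

definition validc :: "nat \<Rightarrow> bool" where
  "validc w \<longleftrightarrow> (\<forall>i<llen w. just (set (take i (list_decode w))) (lnth w i))"

lemma validc_enc: "validc (list_encode ws) = validL ws"
  unfolding validc_def validL_def by simp

lemma rec1_min: "rec1 f \<Longrightarrow> rec1 g \<Longrightarrow> rec1 (\<lambda>x. min (f x) (g x))"
  unfolding min_def by (intro rec1I)

lemma rec1_cp: "rec1 f \<Longrightarrow> rec1 (\<lambda>x. cp (f x))" unfolding cp_def by (intro rec1I)
lemma rec1_xp: "rec1 f \<Longrightarrow> rec1 (\<lambda>x. xp (f x))" unfolding xp_def by (intro rec1I)
lemma rec1_yp: "rec1 f \<Longrightarrow> rec1 (\<lambda>x. yp (f x))" unfolding yp_def by (intro rec1I)
lemma rec1_c1: "rec1 f \<Longrightarrow> rec1 (\<lambda>x. c1 (f x))" unfolding c1_def by (intro rec1I)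
lemma rec1_c2: "rec1 f \<Longrightarrow> rec1 (\<lambda>x. c2 (f x))" unfolding c2_def by (intro rec1I)
lemma rec1_ent: "rec1 f \<Longrightarrow> rec1 g \<Longrightarrow> rec1 h \<Longrightarrow> rec1 (\<lambda>x. ent (f x) (g x) (h x))"
  unfolding ent_def by (intro rec1I)

lemmas rec1J = rec1I rec1_min rec1_cp rec1_xp rec1_yp rec1_c1 rec1_c2 rec1_ent rec1_lnth rec1_llen

lemma decP_validc: "decP validc"
proof -
  have e: "validc w \<longleftrightarrow> (\<forall>i<llen w. 
    (cp (lnth w i) mod 8 = 0 \<and> yp (lnth w i) = 0) \<or> (cp (lnth w i) mod 8 = 1 \<and> yp (lnth w i) = Suc (xp (lnth w i))) \<or>
    (cp (lnth w i) mod 8 = 2 \<and> yp (lnth w i) = fst (prod_decode (xp (lnth w i)))) \<or>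
    (cp (lnth w i) mod 8 = 3 \<and> yp (lnth w i) = snd (prod_decode (xp (lnth w i)))) \<or>
    (cp (lnth w i) mod 8 = 4 \<and> (\<exists>j<min i (llen w). cp (lnth w j) = c2 (cp (lnth w i)) \<and> xp (lnth w j) = xp (lnth w i) \<and>
        (\<exists>k<min i (llen w). cp (lnth w k) = c1 (cp (lnth w i)) \<and> xp (lnth w k) = yp (lnth w j) \<and> yp (lnth w k) = yp (lnth w i)))) \<or>
    (cp (lnth w i) mod 8 = 5 \<and> (\<exists>j<min i (llen w). cp (lnth w j) = c1 (cp (lnth w i)) \<and> xp (lnth w j) = xp (lnth w i) \<and>
        (\<exists>k<min i (llen w). cp (lnth w k) = c2 (cp (lnth w i)) \<and> xp (lnth w k) = xp (lnth w i) \<and>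
           yp (lnth w i) = prod_encode (yp (lnth w j), yp (lnth w k))))) \<or>
    (cp (lnth w i) mod 8 = 6 \<and> fst (prod_decode (xp (lnth w i))) = 0 \<and> (\<exists>j<min i (llen w). cp (lnth w j) = c1 (cp (lnth w i)) \<and>
        xp (lnth w j) = snd (prod_decode (xp (lnth w i))) \<and> yp (lnth w j) = yp (lnth w i))) \<or>
    (cp (lnth w i) mod 8 = 6 \<and> fst (prod_decode (xp (lnth w i))) \<noteq> 0 \<and>
      (\<exists>j<min i (llen w). cp (lnth w j) = cp (lnth w i) \<and>
         xp (lnth w j) = prod_encode (fst (prod_decode (xp (lnth w i))) - 1, snd (prod_decode (xp (lnth w i)))) \<and>
        (\<exists>k<min i (llen w). cp (lnth w k) = c2 (cp (lnth w i)) \<and>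
           xp (lnth w k) = prod_encode (fst (prod_decode (xp (lnth w i))) - 1, prod_encode (yp (lnth w j), snd (prod_decode (xp (lnth w i))))) \<and>
           yp (lnth w k) = yp (lnth w i)))) \<or>
    (cp (lnth w i) mod 8 = 7 \<and> (\<exists>j<min i (llen w). cp (lnth w j) = cp (lnth w i) div 8 \<and>
         xp (lnth w j) = prod_encode (yp (lnth w i), xp (lnth w i)) \<and> yp (lnth w j) = 0) \<and>
        (\<forall>z<yp (lnth w i). \<exists>j<min i (llen w). cp (lnth w j) = cp (lnth w i) div 8 \<and>
           xp (lnth w j) = prod_encode (z, xp (lnth w i)) \<and> yp (lnth w j) \<noteq> 0)))" for w
    unfolding validc_def just_def justP_def by (simp only: bex_take_lnth)
  show ?thesis
    apply (rule decP_ext[OF _ e[symmetric]])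
    apply (intro rec1J)
    done
qed

lemma decP_validc': "rec1 f \<Longrightarrow> decP (\<lambda>x. validc (f x))"
  by (rule decP_comp[OF decP_validc])

lemma validc_sound: "validc w \<Longrightarrow> i < llen w \<Longrightarrow> sem (lnth w i)"
  using validL_sound[of "list_decode w" "lnth w i"] validc_enc[of "list_decode w"]
  by (simp add: lnth_def llen_def)

lemma ev_iff_validc: "ev (decode e) x y \<longleftrightarrow> (\<exists>w. validc w \<and> (\<exists>i<llen w. lnth w i = ent e x y))"
proof
  assume "ev (decode e) x y"
  then obtain ws where ws: "validL ws" "ent e x y \<in> set ws" using ev_complete by blast
  then obtain i where "i < length ws" "ws ! i = ent e x y" by (metis in_set_conv_nth)
  then show "\<exists>w. validc w \<and> (\<exists>i<llen w. lnth w i = ent e x y)"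
    using ws by (intro exI[of _ "list_encode ws"]) (auto simp: validc_enc)
next
  assume "\<exists>w. validc w \<and> (\<exists>i<llen w. lnth w i = ent e x y)"
  then obtain w i where "validc w" "i < llen w" "lnth w i = ent e x y" by blast
  then show "ev (decode e) x y" using validc_sound[of w i] by (simp add: sem_def)
qed

definition kl :: "nat \<Rightarrow> nat \<Rightarrow> nat \<Rightarrow> bool" where
  "kl e x w \<longleftrightarrow> validc w \<and> (\<exists>i<llen w. cp (lnth w i) = e \<and> xp (lnth w i) = x)"

lemma halts_iff_kl: "phi e x \<noteq> None \<longleftrightarrow> (\<exists>w. kl e x w)"
proof -
  have "phi e x \<noteq> None \<longleftrightarrow> (\<exists>y w. validc w \<and> (\<exists>i<llen w. lnth w i = ent e x y))"
    unfolding phi_None ev_iff_validc by (rule refl)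
  also have "\<dots> \<longleftrightarrow> (\<exists>w. kl e x w)"
    unfolding kl_def ent_eq_iff by blast
  finally show ?thesis .
qed

lemma phi_Some_iff: "phi e x = Some y \<longleftrightarrow> (\<exists>w. validc w \<and> (\<exists>i<llen w. cp (lnth w i) = e \<and> xp (lnth w i) = x \<and> yp (lnth w i) = y))"
  unfolding phi_Some ev_iff_validc ent_eq_iff by simp

lemma decP_kl0: "decP (\<lambda>q. kl (fst (prod_decode q)) (fst (prod_decode (snd (prod_decode q)))) (snd (prod_decode (snd (prod_decode q)))))"
  unfolding kl_def by (intro rec1J decP_validc')

lemma decP_kl: "rec1 e \<Longrightarrow> rec1 x \<Longrightarrow> rec1 w \<Longrightarrow> decP (\<lambda>q. kl (e q) (x q) (w q))"
  using decP_comp[OF decP_kl0 rec1_pair[of e "\<lambda>q. prod_encode (x q, w q)"]] rec1_pair[of x w] by simp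

definition klv :: "nat \<Rightarrow> nat \<Rightarrow> nat \<Rightarrow> nat \<Rightarrow> bool" where
  "klv e x y w \<longleftrightarrow> validc w \<and> (\<exists>i<llen w. cp (lnth w i) = e \<and> xp (lnth w i) = x \<and> yp (lnth w i) = y)"

lemma decP_klv0: "decP (\<lambda>q. klv (fst (prod_decode q)) (fst (prod_decode (snd (prod_decode q))))
   (fst (prod_decode (snd (prod_decode (snd (prod_decode q)))))) (snd (prod_decode (snd (prod_decode (snd (prod_decode q)))))))"
  unfolding klv_def by (intro rec1J decP_validc')

lemma decP_klv: "rec1 e \<Longrightarrow> rec1 x \<Longrightarrow> rec1 y \<Longrightarrow> rec1 w \<Longrightarrow> decP (\<lambda>q. klv (e q) (x q) (y q) (w q))"
  using decP_comp[OF decP_klv0 rec1_pair[of e "\<lambda>q. prod_encode (x q, prod_encode (y q, w q))"]]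
    rec1_pair[of x "\<lambda>q. prod_encode (y q, w q)"] rec1_pair[of y w] by simp

lemma phi_Some_klv: "phi e x = Some y \<longleftrightarrow> (\<exists>w. klv e x y w)"
  unfolding phi_Some_iff klv_def ..

definition sig1 :: "nat set \<Rightarrow> bool" where
  "sig1 S \<longleftrightarrow> (\<exists>P. decP (\<lambda>p. P (fst (prod_decode p)) (snd (prod_decode p))) \<and> S = {x. \<exists>w. P w x})"

lemma sig1I: "decP (\<lambda>p. P (fst (prod_decode p)) (snd (prod_decode p))) \<Longrightarrow> sig1 {x. \<exists>w. P w x}"
  unfolding sig1_def by blast

lemma ev_Mu_iff:
  assumes pf: "\<And>x. ev pf x (F x)"
  shows "ev (Mu pf) x y \<longleftrightarrow> F (prod_encode (y, x)) = 0 \<and> (\<forall>z<y. F (prod_encode (z, x)) \<noteq> 0)"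
proof
  assume "ev (Mu pf) x y"
  then show "F (prod_encode (y, x)) = 0 \<and> (\<forall>z<y. F (prod_encode (z, x)) \<noteq> 0)"
  proof (cases rule: ev.cases)
    case ev_Mu
    then show ?thesis using pf ev_det by metis
  qed
next
  assume a: "F (prod_encode (y, x)) = 0 \<and> (\<forall>z<y. F (prod_encode (z, x)) \<noteq> 0)"
  show "ev (Mu pf) x y"
  proof (rule ev_Mu)
    show "ev pf (prod_encode (y, x)) 0" using pf[of "prod_encode (y, x)"] a by simp
    show "\<forall>z<y. \<exists>v. v \<noteq> 0 \<and> ev pf (prod_encode (z, x)) v" using pf a by blast
  qed
qed

lemma sig1_ce: assumes "sig1 S" shows "ce S"
proof -
  obtain P where P: "decP (\<lambda>p. P (fst (prod_decode p)) (snd (prod_decode p)))" and S: "S = {x. \<exists>w. P w x}"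
    using assms unfolding sig1_def by blast
  define F where "F = (\<lambda>p. 1 - (if P (fst (prod_decode p)) (snd (prod_decode p)) then 1 else (0::nat)))"
  have "rec1 F" unfolding F_def using P by (intro rec1I)
  then obtain pf where pf: "\<And>x. ev pf x (F x)" unfolding rec1_def by blast
  have "x \<in> S \<longleftrightarrow> (\<exists>y. ev (Mu pf) x y)" for x
  proof
    assume "x \<in> S"
    then have ex: "\<exists>w. P w x" using S by simp
    define y where "y = (LEAST w. P w x)"
    have "P y x" unfolding y_def using ex by (metis LeastI)
    moreover have "\<forall>z<y. \<not> P z x" unfolding y_def using not_less_Least by blast
    ultimately have "ev (Mu pf) x y" using ev_Mu_iff[OF pf] by (simp add: F_def)
    then show "\<exists>y. ev (Mu pf) x y" by blast
  next
    assume "\<exists>y. ev (Mu pf) x y"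
    then obtain y where "ev (Mu pf) x y" by blast
    then have "F (prod_encode (y, x)) = 0" using ev_Mu_iff[OF pf] by blast
    then have "P y x" by (simp add: F_def split: if_splits)
    then show "x \<in> S" using S by blast
  qed
  then have "S = {x. \<exists>y. ev (decode (enc (Mu pf))) x y}" unfolding decode_enc by blast
  then have "S = {x. phi (enc (Mu pf)) x \<noteq> None}" by (simp only: phi_None)
  then show ?thesis unfolding ce_def by blast
qed

lemma ce_sig1: assumes "ce S" shows "sig1 S"
proof -
  obtain e where e: "S = {x. phi e x \<noteq> None}" using assms unfolding ce_def by blast
  have "S = {x. \<exists>w. kl e x w}" using e halts_iff_kl by auto
  moreover have "decP (\<lambda>p. kl e (snd (prod_decode p)) (fst (prod_decode p)))"
    by (intro decP_kl rec1I)
  ultimately show ?thesis using sig1I[of "\<lambda>w x. kl e x w"] by simp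
qed

lemma sig1_iff_ce: "sig1 S \<longleftrightarrow> ce S" using sig1_ce ce_sig1 by blast

lemma sig1_Un: assumes "sig1 S" "sig1 T" shows "sig1 (S \<union> T)"
proof -
  obtain P where P: "decP (\<lambda>p. P (fst (prod_decode p)) (snd (prod_decode p)))" and S: "S = {x. \<exists>w. P w x}"
    using assms(1) unfolding sig1_def by blast
  obtain Q where Q: "decP (\<lambda>p. Q (fst (prod_decode p)) (snd (prod_decode p)))" and T: "T = {x. \<exists>w. Q w x}"
    using assms(2) unfolding sig1_def by blast
  have "decP (\<lambda>p. P (fst (prod_decode p)) (snd (prod_decode p)) \<or> Q (fst (prod_decode p)) (snd (prod_decode p)))"
    using P Q by (rule decP_disj)
  then have "sig1 {x. \<exists>w. P w x \<or> Q w x}" by (rule sig1I)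
  moreover have "{x. \<exists>w. P w x \<or> Q w x} = S \<union> T" using S T by auto
  ultimately show ?thesis by simp
qed

lemma sig1_Int: assumes "sig1 S" "sig1 T" shows "sig1 (S \<inter> T)"
proof -
  obtain P where P: "decP (\<lambda>p. P (fst (prod_decode p)) (snd (prod_decode p)))" and S: "S = {x. \<exists>w. P w x}"
    using assms(1) unfolding sig1_def by blast
  obtain Q where Q: "decP (\<lambda>p. Q (fst (prod_decode p)) (snd (prod_decode p)))" and T: "T = {x. \<exists>w. Q w x}"
    using assms(2) unfolding sig1_def by blast
  have P': "decP (\<lambda>p. P (fst (prod_decode (fst (prod_decode p)))) (snd (prod_decode p)))"
    using decP_comp[OF P rec1_pair[OF rec1_fst[OF rec1_fst[OF rec1_id]] rec1_snd[OF rec1_id]]] by simp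
  have Q': "decP (\<lambda>p. Q (snd (prod_decode (fst (prod_decode p)))) (snd (prod_decode p)))"
    using decP_comp[OF Q rec1_pair[OF rec1_snd[OF rec1_fst[OF rec1_id]] rec1_snd[OF rec1_id]]] by simp
  have "sig1 {x. \<exists>w. P (fst (prod_decode w)) x \<and> Q (snd (prod_decode w)) x}"
    by (rule sig1I) (rule decP_conj[OF P' Q'])
  moreover have "{x. \<exists>w. P (fst (prod_decode w)) x \<and> Q (snd (prod_decode w)) x} = S \<inter> T"
  proof
    show "S \<inter> T \<subseteq> {x. \<exists>w. P (fst (prod_decode w)) x \<and> Q (snd (prod_decode w)) x}"
    proof
      fix x assume "x \<in> S \<inter> T"
      then obtain w1 w2 where "P w1 x" "Q w2 x" using S T by blast
      then show "x \<in> {x. \<exists>w. P (fst (prod_decode w)) x \<and> Q (snd (prod_decode w)) x}"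
        by (intro CollectI exI[of _ "prod_encode (w1, w2)"]) simp
    qed
  qed (use S T in auto)
  ultimately show ?thesis by simp
qed

lemma sig1_dec: "decP P \<Longrightarrow> sig1 {x. P x}"
  using sig1I[of "\<lambda>w x. P x"] decP_comp[of P "\<lambda>p. snd (prod_decode p)"] rec1_snd[OF rec1_id] by simp

lemma sig1_proj: assumes "sig1 S" shows "sig1 {x. \<exists>y. prod_encode (x, y) \<in> S}"
proof -
  obtain P where P: "decP (\<lambda>p. P (fst (prod_decode p)) (snd (prod_decode p)))" and S: "S = {x. \<exists>w. P w x}"
    using assms(1) unfolding sig1_def by blast
  have P': "decP (\<lambda>p. P (fst (prod_decode (fst (prod_decode p)))) (prod_encode (snd (prod_decode p), snd (prod_decode (fst (prod_decode p))))))"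
    using decP_comp[OF P rec1_pair[OF rec1_fst[OF rec1_fst[OF rec1_id]] rec1_pair[OF rec1_snd[OF rec1_id] rec1_snd[OF rec1_fst[OF rec1_id]]]]]
    by simp
  have "sig1 {x. \<exists>w. P (fst (prod_decode w)) (prod_encode (x, snd (prod_decode w)))}"
    by (rule sig1I) (rule P')
  moreover have "{x. \<exists>w. P (fst (prod_decode w)) (prod_encode (x, snd (prod_decode w)))} = {x. \<exists>y. prod_encode (x, y) \<in> S}"
  proof
    show "{x. \<exists>y. prod_encode (x, y) \<in> S} \<subseteq> {x. \<exists>w. P (fst (prod_decode w)) (prod_encode (x, snd (prod_decode w)))}"
    proof
      fix x assume "x \<in> {x. \<exists>y. prod_encode (x, y) \<in> S}"
      then obtain y w where "P w (prod_encode (x, y))" using S by blast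
      then show "x \<in> {x. \<exists>w. P (fst (prod_decode w)) (prod_encode (x, snd (prod_decode w)))}"
        by (intro CollectI exI[of _ "prod_encode (w, y)"]) simp
    qed
  qed (use S in auto)
  ultimately show ?thesis by simp
qed

lemma sig1_UN: "finite I \<Longrightarrow> (\<And>i. i \<in> I \<Longrightarrow> sig1 (S i)) \<Longrightarrow> sig1 (\<Union>i\<in>I. S i)"
proof (induction I rule: finite_induct)
  case empty
  have "sig1 {x. False}" by (rule sig1_dec) (rule decP_const)
  then show ?case by simp
next
  case (insert i I) then show ?case using sig1_Un by simp
qed

lemma sig1_INT: "finite I \<Longrightarrow> (\<And>i. i \<in> I \<Longrightarrow> sig1 (S i)) \<Longrightarrow> sig1 (\<Inter>i\<in>I. S i)"
proof (induction I rule: finite_induct)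
  case empty
  have "sig1 {x. True}" by (rule sig1_dec) (rule decP_const)
  then show ?case by simp
next
  case (insert i I) then show ?case using sig1_Int by simp
qed

lemma decP_bex_fin: "finite F \<Longrightarrow> (\<And>c. c \<in> F \<Longrightarrow> decP (Q c)) \<Longrightarrow> decP (\<lambda>x. \<exists>c\<in>F. Q c x)"
proof (induction F rule: finite_induct)
  case empty then show ?case using decP_const[of False] by simp
next
  case (insert c F)
  have "decP (\<lambda>x. Q c x \<or> (\<exists>c\<in>F. Q c x))" using insert by (intro decP_disj) auto
  then show ?case by simp
qed

lemma decP_fin: assumes "finite F" "rec1 f" shows "decP (\<lambda>x. f x \<in> F)"
proof -
  have "decP (\<lambda>x. \<exists>c\<in>F. f x = c)"
    by (rule decP_bex_fin[OF assms(1)]) (intro decP_eq assms(2) rec1_const)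
  then show ?thesis by (rule decP_ext) blast
qed

primrec enc_cprog :: "nat \<Rightarrow> nat" where
  "enc_cprog 0 = 0"
| "enc_cprog (Suc n) = 4 + 8 * prod_encode (1, enc_cprog n)"

lemma enc_cprog: "enc (cprog n) = enc_cprog n"
  by (induction n) auto

lemma rec1_enc_cprog: "rec1 f \<Longrightarrow> rec1 (\<lambda>x. enc_cprog (f x))"
proof -
  assume f: "rec1 f"
  have "rec1 (\<lambda>x. natrec (\<lambda>y. 0) (\<lambda>z. 4 + 8 * prod_encode (1, fst (prod_decode (snd (prod_decode z))))) (f x) 0)"
    by (intro rec1_natrec rec1I f)
  moreover have "natrec (\<lambda>y. 0) (\<lambda>z. 4 + 8 * prod_encode (1, fst (prod_decode (snd (prod_decode z))))) n m = enc_cprog n" for n m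
    by (induction n) auto
  ultimately show ?thesis by (elim rec1_ext) simp
qed

lemma smn:
  assumes "rec1 (\<lambda>p. D (fst (prod_decode p)) (snd (prod_decode p)))"
  shows "\<exists>f. total_computable f \<and> (\<forall>n x. phi (f n) x = Some (D n x))"
proof -
  obtain P where P: "\<And>x. ev P x (D (fst (prod_decode x)) (snd (prod_decode x)))"
    using assms unfolding rec1_def by blast
  define f where "f n = enc (Comp P (Pair (cprog n) (Pair Left Right)))" for n
  have ev: "ev (decode (f n)) x (D n x)" for n x
  proof -
    have "ev (Pair Left Right) x x"
      by (metis ev_Left ev_Pair ev_Right prod.collapse prod_decode_inverse)
    then have "ev (Pair (cprog n) (Pair Left Right)) x (prod_encode (n, x))"
      by (rule ev_Pair[OF ev_cprog])
    from ev_Comp[OF this P] show ?thesis unfolding f_def decode_enc by simp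
  qed
  have eq: "4 + 8 * prod_encode (enc P, 5 + 8 * prod_encode (enc_cprog n, 5 + 8 * prod_encode (2, 3))) = f n" for n
    by (simp add: f_def enc_cprog)
  have "rec1 (\<lambda>n. 4 + 8 * prod_encode (enc P, 5 + 8 * prod_encode (enc_cprog n, 5 + 8 * prod_encode (2, 3))))"
    by (intro rec1I rec1_enc_cprog)
  then have "rec1 f" using eq by (rule rec1_ext)
  then show ?thesis using ev phi_ev rec1_total_computable by blast
qed

definition lb :: "nat \<Rightarrow> nat" where "lb x = fst (prod_decode x)"
definition lt :: "nat \<Rightarrow> nat" where "lt x = fst (prod_decode (snd (prod_decode x)))"
definition lr :: "nat \<Rightarrow> nat" where "lr x = snd (prod_decode (snd (prod_decode x)))"

lemma rec1_lb: "rec1 f \<Longrightarrow> rec1 (\<lambda>x. lb (f x))" unfolding lb_def by (intro rec1I)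
lemma rec1_lt: "rec1 f \<Longrightarrow> rec1 (\<lambda>x. lt (f x))" unfolding lt_def by (intro rec1I)
lemma rec1_lr: "rec1 f \<Longrightarrow> rec1 (\<lambda>x. lr (f x))" unfolding lr_def by (intro rec1I)

definition ARset :: "nat list \<Rightarrow> nat set" where
  "ARset ar = (\<lambda>i. prod_encode (i, ar ! i)) ` {..<length ar}"

lemma finite_ARset: "finite (ARset ar)" unfolding ARset_def by simp

lemma ARset_iff: "prod_encode (i, m) \<in> ARset ar \<longleftrightarrow> i < length ar \<and> m = ar ! i"
  unfolding ARset_def by auto

lemma lit_parts:
  "lb (lit_code p at) = (if p then 1 else 0)"
  "lt (lit_code p (AEq a b)) = 0" "lr (lit_code p (AEq a b)) = prod_encode (a, b)"
  "lt (lit_code p (ARel i xs)) = Suc i" "lr (lit_code p (ARel i xs)) = list_encode xs"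
  by (simp_all add: lb_def lt_def lr_def lit_code_def)

lemma lit_code_eq: "x = prod_encode (lb x, prod_encode (lt x, lr x))"
  by (simp add: lb_def lt_def lr_def)

definition diagF :: "nat list \<Rightarrow> nat set \<Rightarrow> (nat \<Rightarrow> nat \<Rightarrow> bool) \<Rightarrow> nat \<Rightarrow> bool" where
  "diagF ar U R x \<longleftrightarrow> lb x \<le> 1 \<and>
    ((lt x = 0 \<and> fst (prod_decode (lr x)) \<in> U \<and> snd (prod_decode (lr x)) \<in> U \<and>
        (fst (prod_decode (lr x)) = snd (prod_decode (lr x)) \<longleftrightarrow> lb x = 1)) \<or>
     (lt x \<noteq> 0 \<and> prod_encode (lt x - 1, llen (lr x)) \<in> ARset ar \<and> (\<forall>j<llen (lr x). lnth (lr x) j \<in> U) \<and>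
        (R (lt x - 1) (lr x) \<longleftrightarrow> lb x = 1)))"

lemma diagram_iff:
  assumes RC: "\<And>i r. i < length ar \<Longrightarrow> llen r = ar ! i \<Longrightarrow> (\<forall>j<llen r. lnth r j \<in> fst C) \<Longrightarrow>
     (snd C i (list_decode r) \<longleftrightarrow> R i r)"
  shows "x \<in> diagram ar C \<longleftrightarrow> diagF ar (fst C) R x"
proof
  assume "x \<in> diagram ar C"
  then obtain p at where x: "x = lit_code p at" and wf: "atom_wf ar (fst C) at" and h: "holds C at \<longleftrightarrow> p"
    unfolding diagram_def by blast
  show "diagF ar (fst C) R x"
  proof (cases at)
    case (AEq a b)
    then show ?thesis using x wf h unfolding diagF_def by (auto simp: lit_parts)
  next
    case (ARel i xs)
    have l: "\<forall>j<llen (list_encode xs). lnth (list_encode xs) j \<in> fst C"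
      using wf ARel by (auto intro!: subsetD[of "set xs" "fst C"] nth_mem)
    then have "snd C i xs \<longleftrightarrow> R i (list_encode xs)" using RC[of i "list_encode xs"] wf ARel by simp
    then show ?thesis using x wf h l ARel unfolding diagF_def by (auto simp: lit_parts ARset_iff)
  qed
next
  assume d: "diagF ar (fst C) R x"
  define p where "p = (lb x = 1)"
  have lbx: "lb x = (if p then 1 else 0)" using d unfolding diagF_def p_def by auto
  show "x \<in> diagram ar C"
  proof (cases "lt x = 0")
    case True
    define at where "at = AEq (fst (prod_decode (lr x))) (snd (prod_decode (lr x)))"
    have "x = lit_code p at"
      by (subst lit_code_eq) (simp add: lit_code_def at_def lbx True)
    moreover have "atom_wf ar (fst C) at" "holds C at \<longleftrightarrow> p"
      using d True unfolding diagF_def at_def p_def by auto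
    ultimately show ?thesis unfolding diagram_def by blast
  next
    case False
    define at where "at = ARel (lt x - 1) (list_decode (lr x))"
    have "x = lit_code p at"
      using False by (subst lit_code_eq) (simp add: lit_code_def at_def lbx)
    moreover have ar: "lt x - 1 < length ar" "llen (lr x) = ar ! (lt x - 1)" "\<forall>j<llen (lr x). lnth (lr x) j \<in> fst C"
      using d False unfolding diagF_def by (auto simp: ARset_iff)
    moreover have "atom_wf ar (fst C) at"
      using ar unfolding at_def by (auto simp: llen_def lnth_def in_set_conv_nth)
    moreover have "holds C at \<longleftrightarrow> p"
      using d False RC[OF ar] unfolding diagF_def at_def p_def by auto
    ultimately show ?thesis unfolding diagram_def by blast
  qed
qed

lemma diag_decP:
  assumes U: "decP (\<lambda>q. Um (fst (prod_decode q)) (snd (prod_decode q)))"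
  and R: "decP (\<lambda>q. Rc (fst (prod_decode q)) (fst (prod_decode (snd (prod_decode q)))) (snd (prod_decode (snd (prod_decode q)))))"
  and UC: "\<And>n u. u \<in> fst (C n) \<longleftrightarrow> Um n u"
  and RC: "\<And>n i r. i < length ar \<Longrightarrow> llen r = ar ! i \<Longrightarrow> (\<forall>j<llen r. lnth r j \<in> fst (C n)) \<Longrightarrow>
     (snd (C n) i (list_decode r) \<longleftrightarrow> Rc n i r)"
  shows "decP (\<lambda>q. snd (prod_decode q) \<in> diagram ar (C (fst (prod_decode q))))"
proof -
  have U': "decP (\<lambda>q. Um (f q) (g q))" if "rec1 f" "rec1 g" for f g
    using decP_comp[OF U rec1_pair[OF that]] by simp
  have R': "decP (\<lambda>q. Rc (f q) (g q) (h q))" if "rec1 f" "rec1 g" "rec1 h" for f g h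
    using decP_comp[OF R rec1_pair[OF that(1) rec1_pair[OF that(2,3)]]] by simp
  have F: "decP (\<lambda>q. f q \<in> ARset ar)" if "rec1 f" for f
    by (rule decP_fin[OF finite_ARset that])
  have e: "snd (prod_decode q) \<in> diagram ar (C (fst (prod_decode q))) \<longleftrightarrow>
     diagF ar (fst (C (fst (prod_decode q)))) (Rc (fst (prod_decode q))) (snd (prod_decode q))" for q
    by (rule diagram_iff) (rule RC)
  have "decP (\<lambda>q. diagF ar {u. Um (fst (prod_decode q)) u} (Rc (fst (prod_decode q))) (snd (prod_decode q)))"
    unfolding diagF_def mem_Collect_eq
    by (intro rec1J U' R' F rec1_lb rec1_lt rec1_lr)
  then show ?thesis
  proof (rule decP_ext)
    fix q
    have "fst (C n) = {u. Um n u}" for n using UC by auto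
    then show "diagF ar {u. Um (fst (prod_decode q)) u} (Rc (fst (prod_decode q))) (snd (prod_decode q)) =
      (snd (prod_decode q) \<in> diagram ar (C (fst (prod_decode q))))" by (simp add: e)
  qed
qed

lemma atom_code_inj: "atom_code a = atom_code b \<Longrightarrow> a = b"
  by (cases a; cases b) (auto simp: list_encode_eq)

lemma lit_code_inj: "lit_code p a = lit_code q b \<longleftrightarrow> p = q \<and> a = b"
proof
  assume "lit_code p a = lit_code q b"
  then have "(if p then 1 else 0::nat) = (if q then 1 else 0) \<and> atom_code a = atom_code b"
    unfolding lit_code_def by simp
  then show "p = q \<and> a = b" using atom_code_inj by (auto split: if_splits)
qed simp

lemma lit_in_diagram: "lit_code p at \<in> diagram ar B \<longleftrightarrow> atom_wf ar (fst B) at \<and> (holds B at \<longleftrightarrow> p)"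
proof
  assume "lit_code p at \<in> diagram ar B"
  then obtain q b where "lit_code p at = lit_code q b" "atom_wf ar (fst B) b" "holds B b \<longleftrightarrow> q"
    unfolding diagram_def by blast
  then show "atom_wf ar (fst B) at \<and> (holds B at \<longleftrightarrow> p)" by (simp add: lit_code_inj)
next
  assume "atom_wf ar (fst B) at \<and> (holds B at \<longleftrightarrow> p)"
  then show "lit_code p at \<in> diagram ar B" unfolding diagram_def by blast
qed

lemma diag_eq: "lit_code True (AEq x x) \<in> diagram ar B \<longleftrightarrow> x \<in> fst B"
  by (simp add: lit_in_diagram)

lemma diag_rel: "lit_code p (ARel i xs) \<in> diagram ar B \<longleftrightarrow>
   i < length ar \<and> length xs = ar ! i \<and> set xs \<subseteq> fst B \<and> (snd B i xs \<longleftrightarrow> p)"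
  by (simp add: lit_in_diagram)

lemma is_index_phi: "is_index ar a B \<Longrightarrow> phi a x = Some 1 \<longleftrightarrow> x \<in> diagram ar B"
  unfolding is_index_def by simp

lemma diagram_eq_univ: "diagram ar B = diagram ar B' \<Longrightarrow> fst B = fst B'"
  using diag_eq by blast

lemma diagram_eq_rel: "diagram ar B = diagram ar B' \<Longrightarrow> i < length ar \<Longrightarrow> length xs = ar ! i \<Longrightarrow>
   set xs \<subseteq> fst B \<Longrightarrow> snd B i xs = snd B' i xs"
  using diag_rel[of True i xs ar B] diag_rel[of True i xs ar B'] diagram_eq_univ[of ar B B'] by auto

lemma iso_diagram: 
  assumes "diagram ar B = diagram ar B'" "iso ar B A" shows "iso ar B' A"
proof -
  obtain h where h: "bij_betw h (fst B) (fst A)" and r: "\<forall>i < length ar. \<forall>xs. length xs = ar ! i \<and> set xs \<subseteq> fst B \<longrightarrow>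
        (snd B i xs \<longleftrightarrow> snd A i (map h xs))"
    using assms(2) unfolding iso_def by blast
  have u: "fst B = fst B'" using diagram_eq_univ[OF assms(1)] .
  show ?thesis unfolding iso_def
  proof (intro exI conjI allI impI)
    show "bij_betw h (fst B') (fst A)" using h u by simp
    fix i xs assume "i < length ar" "length xs = ar ! i \<and> set xs \<subseteq> fst B'"
    then show "snd B' i xs \<longleftrightarrow> snd A i (map h xs)"
      using r diagram_eq_rel[OF assms(1), of i xs] u by auto
  qed
qed

lemma is_index_diagram: assumes "is_index ar a B" "is_index ar a B'" shows "diagram ar B = diagram ar B'"
proof -
  have "x \<in> diagram ar B \<longleftrightarrow> x \<in> diagram ar B'" for x
    using is_index_phi[OF assms(1), of x] is_index_phi[OF assms(2), of x] by simp
  then show ?thesis by blast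
qed

lemma index_set_char: "is_index ar a B \<Longrightarrow> a \<in> index_set ar A \<longleftrightarrow> iso ar B A"
  unfolding index_set_def using iso_diagram is_index_diagram by blast

lemma index_set_finI: "is_index ar a B \<Longrightarrow> finite (fst B) \<Longrightarrow> a \<in> index_set_fin ar"
  unfolding index_set_fin_def by blast

definition litEq :: "nat \<Rightarrow> nat" where "litEq x = lit_code True (AEq x x)"

lemma litEq_alt: "litEq x = prod_encode (1, prod_encode (0, prod_encode (x, x)))"
  by (simp add: litEq_def lit_code_def)

lemma rec1_litEq: "rec1 f \<Longrightarrow> rec1 (\<lambda>x. litEq (f x))"
  unfolding litEq_alt by (intro rec1I)

lemma sig1_phi_const: "sig1 {a. phi a c = Some 1}"
proof -
  have "decP (\<lambda>p. klv (snd (prod_decode p)) c 1 (fst (prod_decode p)))"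
    by (intro decP_klv rec1I)
  then have "sig1 {a. \<exists>w. klv a c 1 w}" by (rule sig1I)
  then show ?thesis by (simp add: phi_Some_klv)
qed

lemma sig1_phi_litEq: "sig1 {a. \<exists>x. phi a (litEq x) = Some 1}"
proof -
  have "decP (\<lambda>p. klv (snd (prod_decode p)) (litEq (fst (prod_decode (fst (prod_decode p))))) 1 (snd (prod_decode (fst (prod_decode p)))))"
    by (intro decP_klv rec1I rec1_litEq)
  then have "sig1 {a. \<exists>w. klv a (litEq (fst (prod_decode w))) 1 (snd (prod_decode w))}" by (rule sig1I)
  moreover have "{a. \<exists>w. klv a (litEq (fst (prod_decode w))) 1 (snd (prod_decode w))} = {a. \<exists>x. phi a (litEq x) = Some 1}"
  proof
    show "{a. \<exists>x. phi a (litEq x) = Some 1} \<subseteq> {a. \<exists>w. klv a (litEq (fst (prod_decode w))) 1 (snd (prod_decode w))}"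
    proof
      fix a assume "a \<in> {a. \<exists>x. phi a (litEq x) = Some 1}"
      then obtain x w where "klv a (litEq x) 1 w" by (auto simp: phi_Some_klv)
      then show "a \<in> {a. \<exists>w. klv a (litEq (fst (prod_decode w))) 1 (snd (prod_decode w))}"
        by (intro CollectI exI[of _ "prod_encode (x, w)"]) simp
    qed
  qed (auto simp: phi_Some_klv)
  ultimately show ?thesis by simp
qed

lemma iso_empty:
  assumes "fst B = {}" "fst A = {}" "\<And>i. i < length ar \<Longrightarrow> ar ! i = 0 \<Longrightarrow> snd B i [] = snd A i []"
  shows "iso ar B A"
  unfolding iso_def
proof (intro exI[of _ id] conjI allI impI)
  show "bij_betw id (fst B) (fst A)" using assms by simp
  fix i xs assume "i < length ar" "length xs = ar ! i \<and> set xs \<subseteq> fst B"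
  then show "snd B i xs = snd A i (map id xs)" using assms by auto
qed

lemma iso_empty_D:
  assumes "iso ar B A" "fst A = {}"
  shows "fst B = {}" "\<And>i. i < length ar \<Longrightarrow> ar ! i = 0 \<Longrightarrow> snd B i [] = snd A i []"
proof -
  obtain h where h: "bij_betw h (fst B) (fst A)" and r: "\<forall>i < length ar. \<forall>xs. length xs = ar ! i \<and> set xs \<subseteq> fst B \<longrightarrow>
        (snd B i xs \<longleftrightarrow> snd A i (map h xs))"
    using assms(1) unfolding iso_def by blast
  show "fst B = {}" using h assms(2) by (simp add: bij_betw_def)
  fix i assume "i < length ar" "ar ! i = 0"
  then show "snd B i [] = snd A i []" using r by auto
qed

theorem part1:
  assumes A0: "fst A = {}"
  shows "m_complete_within Pi01 (index_set ar A) (index_set_fin ar)"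
proof -
  define Z0 where "Z0 = {i. i < length ar \<and> ar ! i = 0}"
  define Ri where "Ri i = {a. phi a (lit_code (\<not> snd A i []) (ARel i [])) = Some 1}" for i
  define E where "E = {a. \<exists>x. phi a (litEq x) = Some 1}"
  define R where "R = - (E \<union> (\<Union>i\<in>Z0. Ri i))"
  have "sig1 (E \<union> (\<Union>i\<in>Z0. Ri i))"
    unfolding E_def Ri_def
    by (intro sig1_Un sig1_phi_litEq sig1_UN sig1_phi_const) (simp add: Z0_def)
  then have RP: "R \<in> Pi01" unfolding Pi01_def R_def by (simp add: sig1_ce)
  have eq: "index_set ar A = R \<inter> index_set_fin ar"
  proof
    show "index_set ar A \<subseteq> R \<inter> index_set_fin ar"
    proof
      fix a assume "a \<in> index_set ar A"
      then obtain B where iso: "iso ar B A" and ix: "is_index ar a B" unfolding index_set_def by blast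
      note D = iso_empty_D[OF iso A0]
      have "a \<notin> E" unfolding E_def using is_index_phi[OF ix] D(1) by (simp add: litEq_def diag_eq)
      moreover have "a \<notin> Ri i" if "i \<in> Z0" for i
        using that is_index_phi[OF ix] D(2)[of i] unfolding Ri_def Z0_def by (simp add: diag_rel)
      ultimately have "a \<in> R" unfolding R_def by blast
      moreover have "a \<in> index_set_fin ar" using index_set_finI[OF ix] D(1) by simp
      ultimately show "a \<in> R \<inter> index_set_fin ar" by blast
    qed
  next
    show "R \<inter> index_set_fin ar \<subseteq> index_set ar A"
    proof
      fix a assume a: "a \<in> R \<inter> index_set_fin ar"
      then obtain B where ix: "is_index ar a B" unfolding index_set_fin_def by blast
      have nE: "a \<notin> E" and nR: "\<And>i. i \<in> Z0 \<Longrightarrow> a \<notin> Ri i" using a unfolding R_def by blast+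
      have "fst B = {}"
      proof (rule ccontr)
        assume "fst B \<noteq> {}"
        then obtain x where "x \<in> fst B" by blast
        then have "a \<in> E" unfolding E_def using is_index_phi[OF ix] by (auto simp: litEq_def diag_eq)
        with nE show False by blast
      qed
      moreover have "snd B i [] = snd A i []" if "i < length ar" "ar ! i = 0" for i
        using nR[of i] that is_index_phi[OF ix] unfolding Ri_def Z0_def by (simp add: diag_rel)
      ultimately have "iso ar B A" using A0 by (intro iso_empty) auto
      then show "a \<in> index_set ar A" unfolding index_set_def using ix by blast
    qed
  qed
  have comp: "\<exists>f. total_computable f \<and> (\<forall>n. f n \<in> index_set_fin ar) \<and> (\<forall>n. n \<in> S \<longleftrightarrow> f n \<in> index_set ar A)"
    if S: "S \<in> Pi01" for S
  proof -
    obtain e where e: "- S = {n. phi e n \<noteq> None}" using S unfolding Pi01_def ce_def by blast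
    define Um where "Um n u = (kl e n u \<and> (\<forall>w<u. \<not> kl e n w))" for n u
    define Z where "Z = {i. i < length ar \<and> snd A i []}"
    define C where "C n = ({u. Um n u}, \<lambda>i (xs::nat list). xs = [] \<and> snd A i [])" for n
    have dU: "decP (\<lambda>q. Um (fst (prod_decode q)) (snd (prod_decode q)))"
      unfolding Um_def by (intro rec1I decP_kl)
    have dR: "decP (\<lambda>q. (\<lambda>n i r. r = 0 \<and> i \<in> Z) (fst (prod_decode q)) (fst (prod_decode (snd (prod_decode q)))) (snd (prod_decode (snd (prod_decode q)))))"
      by (intro rec1I decP_fin) (simp add: Z_def)
    have dd: "decP (\<lambda>q. snd (prod_decode q) \<in> diagram ar (C (fst (prod_decode q))))"
    proof (rule diag_decP[OF dU dR])
      show "u \<in> fst (C n) \<longleftrightarrow> Um n u" for n u by (simp add: C_def)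
      fix n i r assume "i < length ar"
      moreover have "list_decode r = [] \<longleftrightarrow> r = 0" by (metis list_decode.simps(1) list_decode_inverse)
      ultimately show "snd (C n) i (list_decode r) \<longleftrightarrow> r = 0 \<and> i \<in> Z" by (auto simp: C_def Z_def)
    qed
    obtain f where f: "total_computable f" and fphi: "\<forall>n x. phi (f n) x = Some (if x \<in> diagram ar (C n) then 1 else 0)"
      using smn[of "\<lambda>n x. if x \<in> diagram ar (C n) then 1 else 0"] dd unfolding decP_def by auto
    have ix: "is_index ar (f n) (C n)" for n unfolding is_index_def using fphi by simp
    have fin: "finite (fst (C n))" for n
    proof -
      have l: "x = (LEAST w. kl e n w)" if "kl e n x" "\<forall>w<x. \<not> kl e n w" for x
        using that by (metis (no_types, lifting) Least_equality not_less)
      have "fst (C n) \<subseteq> {LEAST w. kl e n w}"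
        unfolding C_def Um_def using l by auto
      then show ?thesis by (rule finite_subset) simp
    qed
    show ?thesis
    proof (intro exI conjI allI)
      show "total_computable f" by (rule f)
      fix n
      show "f n \<in> index_set_fin ar" using index_set_finI[OF ix fin] .
      have "f n \<in> index_set ar A \<longleftrightarrow> iso ar (C n) A" by (rule index_set_char[OF ix])
      also have "\<dots> \<longleftrightarrow> fst (C n) = {}"
      proof
        assume "iso ar (C n) A" then show "fst (C n) = {}" using iso_empty_D(1) A0 by blast
      next
        assume "fst (C n) = {}" then show "iso ar (C n) A" using A0 by (intro iso_empty) (auto simp: C_def)
      qed
      also have "\<dots> \<longleftrightarrow> \<not> (\<exists>w. kl e n w)"
      proof
        assume "fst (C n) = {}"
        show "\<not> (\<exists>w. kl e n w)"
        proof
          assume ex: "\<exists>w. kl e n w"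
          have "Um n (LEAST w. kl e n w)" unfolding Um_def using ex
            by (metis LeastI not_less_Least)
          then show False using \<open>fst (C n) = {}\<close> by (simp add: C_def)
        qed
      qed (auto simp: C_def Um_def)
      also have "\<dots> \<longleftrightarrow> n \<in> S" using e halts_iff_kl by blast
      finally show "n \<in> S \<longleftrightarrow> f n \<in> index_set ar A" by simp
    qed
  qed
  show ?thesis unfolding m_complete_within_def within_def
    using RP eq comp by blast
qed

definition mini :: "nat \<Rightarrow> nat \<Rightarrow> nat \<Rightarrow> bool" where
  "mini e n w \<longleftrightarrow> kl e n w \<and> (\<forall>v<w. \<not> kl e n v)"

lemma mini_iff: "mini e n w \<longleftrightarrow> (\<exists>v. kl e n v) \<and> w = (LEAST v. kl e n v)"
proof
  assume "mini e n w"
  then have "kl e n w" "\<forall>v<w. \<not> kl e n v" unfolding mini_def by auto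
  then show "(\<exists>v. kl e n v) \<and> w = (LEAST v. kl e n v)"
    by (metis (no_types, lifting) Least_equality not_less)
next
  assume "(\<exists>v. kl e n v) \<and> w = (LEAST v. kl e n v)"
  then show "mini e n w" unfolding mini_def by (metis LeastI not_less_Least)
qed

lemma decP_mini: "rec1 e \<Longrightarrow> rec1 n \<Longrightarrow> rec1 w \<Longrightarrow> decP (\<lambda>q. mini (e q) (n q) (w q))"
proof -
  assume a: "rec1 e" "rec1 n" "rec1 w"
  have "decP (\<lambda>q. mini (fst (prod_decode q)) (fst (prod_decode (snd (prod_decode q)))) (snd (prod_decode (snd (prod_decode q)))))"
    unfolding mini_def by (intro rec1I decP_kl)
  from decP_comp[OF this rec1_pair[OF a(1) rec1_pair[OF a(2,3)]]] show ?thesis by simp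
qed

lemma iso_card: "iso ar B A \<Longrightarrow> card (fst B) = card (fst A)"
  unfolding iso_def using bij_betw_same_card by blast

theorem part2_mc:
  assumes fin: "finite (fst A)" and k: "card (fst A) \<ge> 1" and S: "S \<in> dce"
  shows "\<exists>f. total_computable f \<and> (\<forall>n. f n \<in> index_set_fin ar) \<and> (\<forall>n. n \<in> S \<longleftrightarrow> f n \<in> index_set ar A)"
proof -
  have "\<exists>S1 S2. S = S1 - S2 \<and> ce S1 \<and> ce S2" using S unfolding dce_def by simp
  then obtain S1 S2 where SS: "S = S1 - S2" "ce S1" "ce S2" by blast
  obtain e1 where e1: "S1 = {n. phi e1 n \<noteq> None}" using SS(2) unfolding ce_def by blast
  obtain e2 where e2: "S2 = {n. phi e2 n \<noteq> None}" using SS(3) unfolding ce_def by blast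
  have ne: "fst A \<noteq> {}" using k by auto
  define a1 where "a1 = Min (fst A)"
  have a1: "a1 \<in> fst A" unfolding a1_def using fin ne by simp
  define e0 where "e0 = Suc (Max (fst A))"
  have e0: "e0 \<notin> fst A"
  proof
    assume "e0 \<in> fst A"
    then have "e0 \<le> Max (fst A)" using Max_ge[OF fin] by blast
    then show False unfolding e0_def by simp
  qed
  define Um where "Um n u \<longleftrightarrow>
     (fst (prod_decode u) = 0 \<and> snd (prod_decode u) \<in> fst A - {a1}) \<or>
     (fst (prod_decode u) \<noteq> 0 \<and> snd (prod_decode u) = a1 \<and> mini e1 n (fst (prod_decode u) - 1)) \<or>
     (fst (prod_decode u) \<noteq> 0 \<and> snd (prod_decode u) = e0 \<and> (\<exists>w\<le>fst (prod_decode u) - 1. mini e1 n w) \<and>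
        (\<exists>w\<le>fst (prod_decode u) - 1. mini e2 n w) \<and>
        (mini e1 n (fst (prod_decode u) - 1) \<or> mini e2 n (fst (prod_decode u) - 1)))" for n u
  define g where "g u = snd (prod_decode u)" for u
  define C where "C n = ({u. Um n u}, \<lambda>i (xs::nat list). set (map g xs) \<subseteq> fst A \<and> snd A i (map g xs))" for n
  define Tab where "Tab = (\<Union>i<length ar. (\<lambda>ys. prod_encode (i, list_encode ys)) ` {ys. set ys \<subseteq> fst A \<and> length ys = ar ! i \<and> snd A i ys})"
  have finTab: "finite Tab" unfolding Tab_def
    by (intro finite_UN_I finite_lessThan finite_imageI finite_subset[OF _ finite_lists_length_eq[OF fin]]) auto
  define Rc where "Rc n i r \<longleftrightarrow> (\<exists>c\<in>Tab. fst (prod_decode c) = i \<and> llen (snd (prod_decode c)) = llen r \<and>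
      (\<forall>j<llen r. snd (prod_decode (lnth r j)) = lnth (snd (prod_decode c)) j))" for n :: nat and i r
  have dU: "decP (\<lambda>q. Um (fst (prod_decode q)) (snd (prod_decode q)))"
    unfolding Um_def by (intro rec1I decP_mini decP_fin) (use fin in simp)
  have dR: "decP (\<lambda>q. Rc (fst (prod_decode q)) (fst (prod_decode (snd (prod_decode q)))) (snd (prod_decode (snd (prod_decode q)))))"
    unfolding Rc_def by (intro decP_bex_fin[OF finTab]) (intro rec1J)
  have dd: "decP (\<lambda>q. snd (prod_decode q) \<in> diagram ar (C (fst (prod_decode q))))"
  proof (rule diag_decP[OF dU dR])
    show "u \<in> fst (C n) \<longleftrightarrow> Um n u" for n u by (simp add: C_def)
    fix n i r assume i: "i < length ar" and lr: "llen r = ar ! i"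
    show "snd (C n) i (list_decode r) \<longleftrightarrow> Rc n i r"
    proof
      assume "snd (C n) i (list_decode r)"
      then have h: "set (map g (list_decode r)) \<subseteq> fst A" "snd A i (map g (list_decode r))" by (auto simp: C_def)
      have "map g (list_decode r) \<in> {ys. set ys \<subseteq> fst A \<and> length ys = ar ! i \<and> snd A i ys}"
        using h lr by (simp add: llen_def)
      then have "prod_encode (i, list_encode (map g (list_decode r))) \<in>
         (\<lambda>ys. prod_encode (i, list_encode ys)) ` {ys. set ys \<subseteq> fst A \<and> length ys = ar ! i \<and> snd A i ys}"
        by (rule imageI)
      then have "prod_encode (i, list_encode (map g (list_decode r))) \<in> Tab"
        unfolding Tab_def using i by blast
      then show "Rc n i r" unfolding Rc_def
        by (rule bexI[rotated]) (auto simp: llen_def lnth_def g_def)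
    next
      assume "Rc n i r"
      then obtain c where c: "c \<in> Tab" "fst (prod_decode c) = i" "llen (snd (prod_decode c)) = llen r"
        "\<forall>j<llen r. snd (prod_decode (lnth r j)) = lnth (snd (prod_decode c)) j" unfolding Rc_def by blast
      from c(1) obtain i' ys where ys: "c = prod_encode (i', list_encode ys)" "set ys \<subseteq> fst A" "snd A i' ys"
        unfolding Tab_def by blast
      have "i' = i" using c(2) ys(1) by simp
      have m: "map g (list_decode r) = ys"
        using c(3,4) ys(1) by (intro nth_equalityI) (auto simp: llen_def lnth_def g_def)
      show "snd (C n) i (list_decode r)" unfolding C_def snd_conv m using ys \<open>i' = i\<close> by simp
    qed
  qed
  obtain f where f: "total_computable f" and fphi: "\<forall>n x. phi (f n) x = Some (if x \<in> diagram ar (C n) then 1 else 0)"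
    using smn[of "\<lambda>n x. if x \<in> diagram ar (C n) then 1 else 0"] dd unfolding decP_def by auto
  have ix: "is_index ar (f n) (C n)" for n unfolding is_index_def using fphi by simp
  define base where "base = (\<lambda>a. prod_encode (0, a)) ` (fst A - {a1})"
  have Ueq: "fst (C n) = base \<union> (if \<exists>v. kl e1 n v then {prod_encode (Suc (LEAST v. kl e1 n v), a1)} else {})
     \<union> (if (\<exists>v. kl e1 n v) \<and> (\<exists>v. kl e2 n v) then {prod_encode (Suc (max (LEAST v. kl e1 n v) (LEAST v. kl e2 n v)), e0)} else {})"
    (is "_ = ?U n") for n
  proof -
    have "Um n (prod_encode (t, v)) \<longleftrightarrow> prod_encode (t, v) \<in> ?U n" for t v
      unfolding Um_def base_def mini_iff using a1 e0 by (cases t) (auto simp: max_def)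
    then have "Um n u \<longleftrightarrow> u \<in> ?U n" for u by (metis prod.collapse prod_decode_inverse)
    then show ?thesis by (auto simp: C_def)
  qed
  have fin_base: "finite base" unfolding base_def using fin by simp
  have card_base: "card base = card (fst A) - 1"
  proof -
    have "inj_on (\<lambda>a. prod_encode (0, a)) (fst A - {a1})" by (rule inj_onI) simp
    then have "card base = card (fst A - {a1})" unfolding base_def by (rule card_image)
    then show ?thesis using fin a1 by (simp add: card_Diff_singleton)
  qed
  have base_fst: "x \<in> base \<Longrightarrow> fst (prod_decode x) = 0" for x unfolding base_def by auto
  show ?thesis
  proof (intro exI conjI allI)
    show "total_computable f" by (rule f)
    fix n
    show "f n \<in> index_set_fin ar" using index_set_finI[OF ix] Ueq[of n] fin_base by simp
    have "f n \<in> index_set ar A \<longleftrightarrow> iso ar (C n) A" by (rule index_set_char[OF ix])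
    also have "\<dots> \<longleftrightarrow> (\<exists>v. kl e1 n v) \<and> \<not> (\<exists>v. kl e2 n v)"
    proof (cases "\<exists>v. kl e1 n v")
      case W1: True
      define x1 where "x1 = prod_encode (Suc (LEAST v. kl e1 n v), a1)"
      have x1: "x1 \<notin> base" using base_fst unfolding x1_def by force
      show ?thesis
      proof (cases "\<exists>v. kl e2 n v")
        case W2: True
        define x2 where "x2 = prod_encode (Suc (max (LEAST v. kl e1 n v) (LEAST v. kl e2 n v)), e0)"
        have x2: "x2 \<notin> base" "x2 \<noteq> x1" using base_fst a1 e0 unfolding x2_def x1_def by force+
        have "fst (C n) = insert x2 (insert x1 base)" using Ueq[of n] W1 W2 unfolding x1_def x2_def by auto
        then have "card (fst (C n)) = card base + 2" using x1 x2 fin_base by simp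
        then have "card (fst (C n)) \<noteq> card (fst A)" using card_base k by simp
        then show ?thesis using iso_card W1 W2 by blast
      next
        case W2: False
        have U: "fst (C n) = insert x1 base" using Ueq[of n] W1 W2 unfolding x1_def by auto
        have gx1: "g x1 = a1" unfolding x1_def g_def by simp
        have gb: "g ` base = fst A - {a1}" unfolding base_def g_def by force
        have inj: "inj_on g (insert x1 base)"
          unfolding inj_on_def base_def x1_def g_def by auto
        have bij: "bij_betw g (fst (C n)) (fst A)"
          unfolding bij_betw_def U using inj gx1 gb a1 by auto
        have "iso ar (C n) A" unfolding iso_def
        proof (intro exI[of _ g] conjI allI impI)
          show "bij_betw g (fst (C n)) (fst A)" by (rule bij)
          fix i xs assume "i < length ar" "length xs = ar ! i \<and> set xs \<subseteq> fst (C n)"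
          then have "set (map g xs) \<subseteq> fst A" using bij unfolding bij_betw_def by auto
          then show "snd (C n) i xs = snd A i (map g xs)" by (simp add: C_def)
        qed
        then show ?thesis using W1 W2 by simp
      qed
    next
      case W1: False
      have "fst (C n) = base" using Ueq[of n] W1 by simp
      then have "card (fst (C n)) \<noteq> card (fst A)" using card_base k by simp
      then show ?thesis using iso_card W1 by blast
    qed
    also have "\<dots> \<longleftrightarrow> n \<in> S" using SS(1) e1 e2 halts_iff_kl by blast
    finally show "n \<in> S \<longleftrightarrow> f n \<in> index_set ar A" by simp
  qed
qed

lemma sig1_phi_fun: assumes "rec1 F" shows "sig1 {q. phi (fst (prod_decode q)) (F (snd (prod_decode q))) = Some 1}"
proof -
  have "decP (\<lambda>p. klv (fst (prod_decode (snd (prod_decode p)))) (F (snd (prod_decode (snd (prod_decode p))))) 1 (fst (prod_decode p)))"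
    by (intro decP_klv rec1I rec1_comp[OF assms])
  then have "sig1 {q. \<exists>w. klv (fst (prod_decode q)) (F (snd (prod_decode q))) 1 w}" by (rule sig1I)
  then show ?thesis by (simp add: phi_Some_klv)
qed

lemma rec1_enc_map: "rec1 f \<Longrightarrow> rec1 (\<lambda>x. list_encode (map (lnth (f x)) zs))"
  by (induction zs) (simp_all add: rec1_const rec1_Suc rec1_pair rec1_lnth)

definition distc :: "nat \<Rightarrow> nat \<Rightarrow> bool" where
  "distc c m \<longleftrightarrow> llen c = m \<and> (\<forall>j<m. \<forall>l<j. lnth c j \<noteq> lnth c l)"

lemma distc_iff: "distc c m \<longleftrightarrow> length (list_decode c) = m \<and> distinct (list_decode c)"
  unfolding distc_def llen_def lnth_def distinct_conv_nth
  by (auto simp: nat_neq_iff) (metis less_trans)+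

lemma decP_distc: "decP (\<lambda>q. distc (snd (prod_decode q)) m)"
  unfolding distc_def by (intro rec1J)

lemma sig1_litEq_j: "sig1 {q. phi (fst (prod_decode q)) (litEq (lnth (snd (prod_decode q)) j)) = Some 1}"
  by (rule sig1_phi_fun) (intro rec1_litEq rec1J)

definition relF :: "bool \<Rightarrow> nat \<Rightarrow> nat list \<Rightarrow> nat \<Rightarrow> nat" where
  "relF b i zs c = lit_code b (ARel i (map (lnth c) zs))"

lemma relF_alt: "relF b i zs c = prod_encode (if b then 1 else 0, prod_encode (Suc i, list_encode (map (lnth c) zs)))"
  by (simp add: relF_def lit_code_def)

lemma sig1_relF: "sig1 {q. phi (fst (prod_decode q)) (relF b i zs (snd (prod_decode q))) = Some 1}"
  by (rule sig1_phi_fun) (unfold relF_alt, intro rec1I rec1_enc_map)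

lemma map_lnth_enc: "set zs \<subseteq> {..<length ys} \<Longrightarrow> map (lnth (list_encode ys)) zs = map ((!) ys) zs"
  by auto

lemma ex_enc: "(\<exists>c. P c) \<longleftrightarrow> (\<exists>ys. P (list_encode ys))"
proof
  assume "\<exists>c. P c" then obtain c where "P c" by blast
  then have "P (list_encode (list_decode c))" by simp
  then show "\<exists>ys. P (list_encode ys)" by blast
qed blast

lemma map_nth_sub: "set zs \<subseteq> {..<length ys} \<Longrightarrow> set ys \<subseteq> U \<Longrightarrow> set (map ((!) ys) zs) \<subseteq> U"
proof
  fix x assume a: "set zs \<subseteq> {..<length ys}" "set ys \<subseteq> U" "x \<in> set (map ((!) ys) zs)"
  then obtain z where "z \<in> set zs" "x = ys ! z" by auto
  with a show "x \<in> U" using nth_mem by blast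
qed

theorem part2_within:
  assumes fin: "finite (fst A)" and k1: "card (fst A) \<ge> 1"
  shows "within dce (index_set ar A) (index_set_fin ar)"
proof -
  define k where "k = card (fst A)"
  define as where "as = sorted_list_of_set (fst A)"
  have as: "distinct as" "set as = fst A" "length as = k" using fin unfolding as_def k_def by auto
  define I where "I = (\<Union>i<length ar. (\<lambda>zs. (i, zs)) ` {zs. set zs \<subseteq> {..<k} \<and> length zs = ar ! i})"
  have finI: "finite I" unfolding I_def
    by (intro finite_UN_I finite_lessThan finite_imageI finite_lists_length_eq)
  define T2 where "T2 = {q. distc (snd (prod_decode q)) (Suc k)} \<inter>
     (\<Inter>j<Suc k. {q. phi (fst (prod_decode q)) (litEq (lnth (snd (prod_decode q)) j)) = Some 1})"
  define T1 where "T1 = {q. distc (snd (prod_decode q)) k} \<inter>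
     (\<Inter>j<k. {q. phi (fst (prod_decode q)) (litEq (lnth (snd (prod_decode q)) j)) = Some 1}) \<inter>
     (\<Inter>p\<in>I. {q. phi (fst (prod_decode q)) (relF (snd A (fst p) (map ((!) as) (snd p))) (fst p) (snd p) (snd (prod_decode q))) = Some 1})"
  define S1 where "S1 = {a. \<exists>c. prod_encode (a, c) \<in> T1}"
  define S2 where "S2 = {a. \<exists>c. prod_encode (a, c) \<in> T2}"
  have "sig1 T2" unfolding T2_def
    by (intro sig1_Int sig1_INT sig1_dec decP_distc sig1_litEq_j) simp
  then have ceS2: "ce S2" unfolding S2_def by (intro sig1_ce sig1_proj)
  have "sig1 T1" unfolding T1_def
    apply (intro sig1_Int)
    subgoal by (rule sig1_dec, rule decP_distc)
    subgoal by (intro sig1_INT sig1_litEq_j) simp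
    subgoal by (rule sig1_INT[OF finI]) (rule sig1_relF)
    done
  then have ceS1: "ce S1" unfolding S1_def by (intro sig1_ce sig1_proj)
  define good1 where "good1 B ys \<longleftrightarrow> length ys = k \<and> distinct ys \<and> set ys \<subseteq> fst B \<and>
     (\<forall>i zs. i < length ar \<and> set zs \<subseteq> {..<k} \<and> length zs = ar ! i \<longrightarrow>
        (snd B i (map ((!) ys) zs) \<longleftrightarrow> snd A i (map ((!) as) zs)))" for B :: struc and ys
  have S1_iff: "a \<in> S1 \<longleftrightarrow> (\<exists>ys. good1 B ys)" if ix: "is_index ar a B" for a B
  proof -
    have T1c: "prod_encode (a, list_encode ys) \<in> T1 \<longleftrightarrow> good1 B ys" for ys
    proof -
      have "prod_encode (a, list_encode ys) \<in> T1 \<longleftrightarrow> (length ys = k \<and> distinct ys \<and>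
          (\<forall>j\<in>{..<k}. lnth (list_encode ys) j \<in> fst B) \<and>
          (\<forall>p\<in>I. relF (snd A (fst p) (map ((!) as) (snd p))) (fst p) (snd p) (list_encode ys) \<in> diagram ar B))"
        unfolding T1_def using is_index_phi[OF ix] by (simp add: distc_iff litEq_def diag_eq)
      also have "\<dots> \<longleftrightarrow> good1 B ys"
      proof
        assume h: "length ys = k \<and> distinct ys \<and>
          (\<forall>j\<in>{..<k}. lnth (list_encode ys) j \<in> fst B) \<and>
          (\<forall>p\<in>I. relF (snd A (fst p) (map ((!) as) (snd p))) (fst p) (snd p) (list_encode ys) \<in> diagram ar B)"
        then have sub: "set ys \<subseteq> fst B" by (auto simp: in_set_conv_nth)
        show "good1 B ys" unfolding good1_def
        proof (intro conjI allI impI)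
          show "length ys = k" "distinct ys" "set ys \<subseteq> fst B" using h sub by auto
          fix i zs assume iz: "i < length ar \<and> set zs \<subseteq> {..<k} \<and> length zs = ar ! i"
          then have "(i, zs) \<in> I" unfolding I_def by blast
          then have "relF (snd A i (map ((!) as) zs)) i zs (list_encode ys) \<in> diagram ar B" using h by force
          moreover have "map (lnth (list_encode ys)) zs = map ((!) ys) zs" using iz h by (intro map_lnth_enc) auto
          ultimately show "snd B i (map ((!) ys) zs) \<longleftrightarrow> snd A i (map ((!) as) zs)"
            unfolding relF_def diag_rel by simp
        qed
      next
        assume g: "good1 B ys"
        then have g1: "length ys = k" "distinct ys" "set ys \<subseteq> fst B" unfolding good1_def by auto
        show "length ys = k \<and> distinct ys \<and>
          (\<forall>j\<in>{..<k}. lnth (list_encode ys) j \<in> fst B) \<and>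
          (\<forall>p\<in>I. relF (snd A (fst p) (map ((!) as) (snd p))) (fst p) (snd p) (list_encode ys) \<in> diagram ar B)"
        proof (intro conjI ballI)
          show "length ys = k" "distinct ys" using g1 by auto
          show "lnth (list_encode ys) j \<in> fst B" if "j \<in> {..<k}" for j using that g1 by auto
          fix p assume "p \<in> I"
          then obtain i zs where p: "p = (i, zs)" "i < length ar" "set zs \<subseteq> {..<k}" "length zs = ar ! i"
            unfolding I_def by blast
          have m: "map (lnth (list_encode ys)) zs = map ((!) ys) zs" using p g1 by (intro map_lnth_enc) auto
          have "set (map ((!) ys) zs) \<subseteq> fst B" using p g1 by (intro map_nth_sub) auto
          moreover have "snd B i (map ((!) ys) zs) \<longleftrightarrow> snd A i (map ((!) as) zs)"
            using g p unfolding good1_def by blast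
          ultimately show "relF (snd A (fst p) (map ((!) as) (snd p))) (fst p) (snd p) (list_encode ys) \<in> diagram ar B"
            unfolding p(1) relF_def diag_rel fst_conv snd_conv m using p by simp
        qed
      qed
      finally show ?thesis .
    qed
    have "a \<in> S1 \<longleftrightarrow> (\<exists>ys. prod_encode (a, list_encode ys) \<in> T1)"
      unfolding S1_def mem_Collect_eq by (rule ex_enc)
    then show ?thesis using T1c by simp
  qed
  have S2_iff: "a \<in> S2 \<longleftrightarrow> Suc k \<le> card (fst B)" if ix: "is_index ar a B" and finB: "finite (fst B)" for a B
  proof -
    have T2c: "prod_encode (a, list_encode ys) \<in> T2 \<longleftrightarrow> length ys = Suc k \<and> distinct ys \<and> set ys \<subseteq> fst B" for ys
    proof -
      have "prod_encode (a, list_encode ys) \<in> T2 \<longleftrightarrow> length ys = Suc k \<and> distinct ys \<and>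
          (\<forall>j\<in>{..<Suc k}. lnth (list_encode ys) j \<in> fst B)"
        unfolding T2_def using is_index_phi[OF ix] by (simp add: distc_iff litEq_def diag_eq)
      also have "\<dots> \<longleftrightarrow> length ys = Suc k \<and> distinct ys \<and> set ys \<subseteq> fst B"
      proof (intro iffI conjI)
        assume h: "length ys = Suc k \<and> distinct ys \<and> (\<forall>j\<in>{..<Suc k}. lnth (list_encode ys) j \<in> fst B)"
        show "set ys \<subseteq> fst B"
        proof
          fix x assume "x \<in> set ys"
          then obtain j where "j < length ys" "x = ys ! j" by (metis in_set_conv_nth)
          then show "x \<in> fst B" using h by auto
        qed
      next
        assume h: "length ys = Suc k \<and> distinct ys \<and> set ys \<subseteq> fst B"
        show "\<forall>j\<in>{..<Suc k}. lnth (list_encode ys) j \<in> fst B"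
        proof
          fix j assume "j \<in> {..<Suc k}"
          then have "j < length ys" using h by simp
          then show "lnth (list_encode ys) j \<in> fst B" using h nth_mem by auto
        qed
      qed auto
      finally show ?thesis .
    qed
    have "a \<in> S2 \<longleftrightarrow> (\<exists>ys. length ys = Suc k \<and> distinct ys \<and> set ys \<subseteq> fst B)"
      unfolding S2_def mem_Collect_eq ex_enc[of "\<lambda>c. prod_encode (a, c) \<in> T2"] T2c ..
    also have "\<dots> \<longleftrightarrow> Suc k \<le> card (fst B)"
    proof
      assume "\<exists>ys. length ys = Suc k \<and> distinct ys \<and> set ys \<subseteq> fst B"
      then obtain ys where "length ys = Suc k" "distinct ys" "set ys \<subseteq> fst B" by blast
      then show "Suc k \<le> card (fst B)" using card_mono[OF finB] distinct_card by metis
    next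
      assume c: "Suc k \<le> card (fst B)"
      define ys where "ys = take (Suc k) (sorted_list_of_set (fst B))"
      have "length ys = Suc k" "distinct ys" "set ys \<subseteq> fst B"
        using c finB unfolding ys_def by (auto dest: in_set_takeD)
      then show "\<exists>ys. length ys = Suc k \<and> distinct ys \<and> set ys \<subseteq> fst B" by blast
    qed
    finally show ?thesis .
  qed
  have iso_good: "\<exists>ys. good1 B ys" if iso: "iso ar B A" for B
  proof -
    obtain h where h: "bij_betw h (fst B) (fst A)" and r: "\<forall>i < length ar. \<forall>xs. length xs = ar ! i \<and> set xs \<subseteq> fst B \<longrightarrow>
        (snd B i xs \<longleftrightarrow> snd A i (map h xs))"
      using iso unfolding iso_def by blast
    define ys where "ys = map (inv_into (fst B) h) as"
    have hinv: "bij_betw (inv_into (fst B) h) (fst A) (fst B)" by (rule bij_betw_inv_into[OF h])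
    have ysj: "h (ys ! j) = as ! j" if "j < k" for j
    proof -
      have "as ! j \<in> h ` fst B" using that as h nth_mem[of j as] unfolding bij_betw_def by auto
      then show ?thesis using that as unfolding ys_def by (simp add: f_inv_into_f)
    qed
    have "good1 B ys" unfolding good1_def
    proof (intro conjI allI impI)
      show "length ys = k" using as unfolding ys_def by simp
      show "distinct ys" unfolding ys_def using as hinv by (simp add: distinct_map bij_betw_def)
      show "set ys \<subseteq> fst B" unfolding ys_def using as hinv by (auto simp: bij_betw_def)
      fix i zs assume iz: "i < length ar \<and> set zs \<subseteq> {..<k} \<and> length zs = ar ! i"
      have ysB: "set ys \<subseteq> fst B" unfolding ys_def using as hinv by (auto simp: bij_betw_def)
      have sub: "set (map ((!) ys) zs) \<subseteq> fst B"
        using iz as ysB by (intro map_nth_sub) (auto simp: ys_def)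
      have e: "map h (map ((!) ys) zs) = map ((!) as) zs" using iz ysj by auto
      have rr: "snd B i (map ((!) ys) zs) = snd A i (map h (map ((!) ys) zs))"
      proof -
        have "length (map ((!) ys) zs) = ar ! i \<and> set (map ((!) ys) zs) \<subseteq> fst B" using iz sub by simp
        then show ?thesis using r iz by blast
      qed
      show "snd B i (map ((!) ys) zs) \<longleftrightarrow> snd A i (map ((!) as) zs)"
        using rr unfolding e .
    qed
    then show ?thesis by blast
  qed
  have good_iso: "iso ar B A" if g: "good1 B ys" and finB: "finite (fst B)" and c: "card (fst B) \<le> k" for B ys
  proof -
    have g1: "length ys = k" "distinct ys" "set ys \<subseteq> fst B" using g unfolding good1_def by auto
    have sy: "set ys = fst B"
      using card_seteq[OF finB g1(3)] c distinct_card[OF g1(2)] g1(1) by simp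
    have bys: "bij_betw ((!) ys) {..<k} (fst B)" using bij_betw_nth[OF g1(2)] g1(1) sy by simp
    have ba: "bij_betw ((!) as) {..<k} (fst A)" using bij_betw_nth[OF as(1)] as by simp
    define iv where "iv = inv_into {..<k} ((!) ys)"
    have biv: "bij_betw iv (fst B) {..<k}" unfolding iv_def by (rule bij_betw_inv_into[OF bys])
    define h where "h x = as ! (iv x)" for x
    have bh: "bij_betw h (fst B) (fst A)" unfolding h_def
      using bij_betw_trans[OF biv ba] by (simp add: comp_def)
    show ?thesis unfolding iso_def
    proof (intro exI[of _ h] conjI allI impI)
      show "bij_betw h (fst B) (fst A)" by (rule bh)
      fix i xs assume ix: "i < length ar" "length xs = ar ! i \<and> set xs \<subseteq> fst B"
      define zs where "zs = map iv xs"
      have zs: "set zs \<subseteq> {..<k}" "length zs = ar ! i" using biv ix unfolding zs_def bij_betw_def by auto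
      have yi: "ys ! (iv x) = x" if "x \<in> fst B" for x
      proof -
        have "x \<in> (!) ys ` {..<k}" using that bys unfolding bij_betw_def by simp
        then show ?thesis unfolding iv_def by (rule f_inv_into_f)
      qed
      have xs: "map ((!) ys) zs = xs" unfolding zs_def map_map
        by (rule map_idI) (use yi ix in auto)
      have "map ((!) as) zs = map h xs" unfolding zs_def h_def by simp
      then show "snd B i xs \<longleftrightarrow> snd A i (map h xs)"
        using g ix zs xs unfolding good1_def by metis
    qed
  qed
  have "index_set ar A = (S1 - S2) \<inter> index_set_fin ar"
  proof
    show "index_set ar A \<subseteq> (S1 - S2) \<inter> index_set_fin ar"
    proof
      fix a assume "a \<in> index_set ar A"
      then obtain B where iso: "iso ar B A" and ix: "is_index ar a B" unfolding index_set_def by blast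
      have finB: "finite (fst B)"
        using iso fin unfolding iso_def by (metis bij_betw_finite)
      have "a \<in> S1" using S1_iff[OF ix] iso_good[OF iso] by simp
      moreover have "a \<notin> S2" using S2_iff[OF ix finB] iso_card[OF iso] k_def by simp
      moreover have "a \<in> index_set_fin ar" by (rule index_set_finI[OF ix finB])
      ultimately show "a \<in> (S1 - S2) \<inter> index_set_fin ar" by blast
    qed
  next
    show "(S1 - S2) \<inter> index_set_fin ar \<subseteq> index_set ar A"
    proof
      fix a assume a: "a \<in> (S1 - S2) \<inter> index_set_fin ar"
      then obtain B where ix: "is_index ar a B" and finB: "finite (fst B)" unfolding index_set_fin_def by blast
      obtain ys where g: "good1 B ys" using a S1_iff[OF ix] by blast
      have "card (fst B) \<le> k" using a S2_iff[OF ix finB] by simp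
      then have "iso ar B A" by (rule good_iso[OF g finB])
      then show "a \<in> index_set ar A" using index_set_char[OF ix] by simp
    qed
  qed
  moreover have "S1 - S2 \<in> dce" unfolding dce_def using ceS1 ceS2 by blast
  ultimately show ?thesis unfolding within_def by blast
qed

theorem theorem2p1:
  fixes ar :: "nat list" and A :: struc
  assumes "finite (fst A)"
  shows "(fst A = {} \<longrightarrow> m_complete_within Pi01 (index_set ar A) (index_set_fin ar))
       \<and> (card (fst A) \<ge> 1 \<longrightarrow> m_complete_within dce (index_set ar A) (index_set_fin ar))"
proof (intro conjI impI)
  assume "fst A = {}"
  then show "m_complete_within Pi01 (index_set ar A) (index_set_fin ar)" by (rule part1)
next
  assume k: "card (fst A) \<ge> 1"
  show "m_complete_within dce (index_set ar A) (index_set_fin ar)"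
    unfolding m_complete_within_def
    using part2_within[OF assms k] part2_mc[OF assms k] by blast
qed

end
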